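(* Let $E$ be a graph. (1) The cardinality of the set of shift-tail equivalence classes of $\partial E$ is at most the cardinality of the set of unitary equivalence classes of irreducible $*$-representations of $C^*(E)$. Consequently, if any two ($*$-)representations of $C^*(E)$ are unitarily equivalent, then any two paths in $\partial E$ are shift-tail equivalent. (2) For any field $k$, the cardinality of the set of shift-tail equivalence classes of $\partial E$ is at most the cardinality of the set of algebraic equivalence classes of irreducible representations of $L_k(E)$. Consequently, if there exists a field $k$ such that any two representations of $L_k(E)$ are algebraically equivalent, then any two paths in $\partial E$ are shift-tail equivalent.
   Context: A graph $E=(E^0,E^1,r,s)$ has vertex set $E^0$, edge set $E^1$, range and source maps; no countability assumed. A vertex is singular if it emits no edges or infinitely many edges, regular otherwise. Finite paths include vertices (length $0$) and sequences $e_1\cdots e_n$ with $r(e_i)=s(e_{i+1})$; infinite paths are sequences $e_1e_2\cdots$. Boundary paths $\partial E$: infinite paths together with finite paths whose range is singular. The shift $\sigma_E$ removes the first edge (fixes vertices; sends a single edge $e$ to $r(e)$); $\alpha,\beta\in\partial E$ are shift-tail equivalent if $\sigma_E^m(\alpha)=\sigma_E^n(\beta)$ for some $m,n\in\mathbb{N}$. $L_k(E)$: universal $k$-algebra generated by pairwise orthogonal idempotents $p_v$ and elements $s_e,s_e^*$ with $p_{s(e)}s_e=s_e=s_ep_{r(e)}$, $p_{r(e)}s_e^*=s_e^*=s_e^*p_{s(e)}$, $s_e^*s_f=\delta_{e,f}p_{r(e)}$, $p_v=\sum_{s(e)=v}s_es_e^*$ for regular $v$. $C^*(E)$: universal $C^*$-algebra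 generated by mutually orthogonal projections $p_v$ and partial isometries $s_e$ with mutually orthogonal ranges, $s_e^*s_e=p_{r(e)}$, $s_es_e^*\le p_{s(e)}$, $p_v=\sum_{s(e)=v}s_es_e^*$ for regular $v$. Algebraic equivalence: intertwined by a linear isomorphism; unitary equivalence: intertwined by a unitary. *)

theory Defs
  imports "HOL-Analysis.Analysis"
begin

record ('v, 'e) graph =
  verts :: "'v set"
  edges :: "'e set"
  rng   :: "'e \<Rightarrow> 'v"
  src   :: "'e \<Rightarrow> 'v"

definition wf_graph :: "('v, 'e) graph \<Rightarrow> bool" where
  "wf_graph G \<longleftrightarrow> (\<forall>e\<in>edges G. src G e \<in> verts G \<and> rng G e \<in> verts G)"

definition emits :: "('v, 'e) graph \<Rightarrow> 'v \<Rightarrow> 'e set" where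
  "emits G v = {e \<in> edges G. src G e = v}"

definition singular :: "('v, 'e) graph \<Rightarrow> 'v \<Rightarrow> bool" where
  "singular G v \<longleftrightarrow> emits G v = {} \<or> infinite (emits G v)"

definition regular :: "('v, 'e) graph \<Rightarrow> 'v \<Rightarrow> bool" where
  "regular G v \<longleftrightarrow> v \<in> verts G \<and> \<not> singular G v"

text \<open>Paths: vertices (length 0), finite nonempty edge sequences, infinite edge sequences.\<close>
datatype ('v, 'e) path = PVert 'v | PFin "'e list" | PInf "nat \<Rightarrow> 'e"

definition fin_path :: "('v, 'e) graph \<Rightarrow> 'e list \<Rightarrow> bool" where
  "fin_path G es \<longleftrightarrow> es \<noteq> [] \<and> set es \<subseteq> edges G \<and>
     (\<forall>i. Suc i < length es \<longrightarrow> rng G (es ! i) = src G (es ! Suc i))"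

definition inf_path :: "('v, 'e) graph \<Rightarrow> (nat \<Rightarrow> 'e) \<Rightarrow> bool" where
  "inf_path G f \<longleftrightarrow> (\<forall>i. f i \<in> edges G \<and> rng G (f i) = src G (f (Suc i)))"

definition boundary :: "('v, 'e) graph \<Rightarrow> ('v, 'e) path set" where
  "boundary G =
     {PVert v | v. v \<in> verts G \<and> singular G v}
   \<union> {PFin es | es. fin_path G es \<and> singular G (rng G (last es))}
   \<union> {PInf f | f. inf_path G f}"

fun shift :: "('v, 'e) graph \<Rightarrow> ('v, 'e) path \<Rightarrow> ('v, 'e) path" where
  "shift G (PVert v) = PVert v"
| "shift G (PFin []) = PFin []"
| "shift G (PFin [e]) = PVert (rng G e)"
| "shift G (PFin (e # f # es)) = PFin (f # es)"
| "shift G (PInf f) = PInf (\<lambda>n. f (Suc n))"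

definition shift_tail_equiv :: "('v, 'e) graph \<Rightarrow> ('v, 'e) path \<Rightarrow> ('v, 'e) path \<Rightarrow> bool" where
  "shift_tail_equiv G \<alpha> \<beta> \<longleftrightarrow> (\<exists>m n. (shift G ^^ m) \<alpha> = (shift G ^^ n) \<beta>)"

definition shift_tail_classes :: "('v, 'e) graph \<Rightarrow> ('v, 'e) path set set" where
  "shift_tail_classes G = boundary G //
     {(\<alpha>, \<beta>). \<alpha> \<in> boundary G \<and> \<beta> \<in> boundary G \<and> shift_tail_equiv G \<alpha> \<beta>}"

text \<open>A representation of L_k(E) on a k-vector space V (realised as a subspace of the
  function space 'a => 'k) is, by the universal property of L_k(E), the same as a family
  of linear operators P v, S e, S' e on V satisfying the defining relations.\<close>

type_synonym ('a, 'k, 'v, 'e) lrep =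
  "('a \<Rightarrow> 'k) set \<times> ('v \<Rightarrow> ('a \<Rightarrow> 'k) \<Rightarrow> ('a \<Rightarrow> 'k))
     \<times> ('e \<Rightarrow> ('a \<Rightarrow> 'k) \<Rightarrow> ('a \<Rightarrow> 'k)) \<times> ('e \<Rightarrow> ('a \<Rightarrow> 'k) \<Rightarrow> ('a \<Rightarrow> 'k))"

definition ksubspace :: "('a \<Rightarrow> 'k::field) set \<Rightarrow> bool" where
  "ksubspace V \<longleftrightarrow> (\<lambda>_. 0) \<in> V \<and> (\<forall>x\<in>V. \<forall>y\<in>V. (\<lambda>i. x i + y i) \<in> V)
     \<and> (\<forall>c. \<forall>x\<in>V. (\<lambda>i. c * x i) \<in> V)"

definition klinear_on :: "('a \<Rightarrow> 'k::field) set \<Rightarrow> (('a \<Rightarrow> 'k) \<Rightarrow> ('b \<Rightarrow> 'k)) \<Rightarrow> bool" where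
  "klinear_on V T \<longleftrightarrow> (\<forall>x\<in>V. \<forall>y\<in>V. T (\<lambda>i. x i + y i) = (\<lambda>i. T x i + T y i))
     \<and> (\<forall>c. \<forall>x\<in>V. T (\<lambda>i. c * x i) = (\<lambda>i. c * T x i))"

definition kop :: "('a \<Rightarrow> 'k::field) set \<Rightarrow> (('a \<Rightarrow> 'k) \<Rightarrow> ('a \<Rightarrow> 'k)) \<Rightarrow> bool" where
  "kop V T \<longleftrightarrow> klinear_on V T \<and> T ` V \<subseteq> V"

definition leavitt_rep :: "('v, 'e) graph \<Rightarrow> ('a, 'k::field, 'v, 'e) lrep \<Rightarrow> bool" where
  "leavitt_rep G R \<longleftrightarrow> (case R of (V, P, S, S') \<Rightarrow>
     ksubspace V
   \<and> (\<forall>v\<in>verts G. kop V (P v))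
   \<and> (\<forall>e\<in>edges G. kop V (S e) \<and> kop V (S' e))
   \<and> (\<forall>v\<in>verts G. \<forall>w\<in>verts G. \<forall>x\<in>V.
        P v (P w x) = (if v = w then P v x else (\<lambda>_. 0)))
   \<and> (\<forall>e\<in>edges G. \<forall>x\<in>V. P (src G e) (S e x) = S e x \<and> S e (P (rng G e) x) = S e x)
   \<and> (\<forall>e\<in>edges G. \<forall>x\<in>V. P (rng G e) (S' e x) = S' e x \<and> S' e (P (src G e) x) = S' e x)
   \<and> (\<forall>e\<in>edges G. \<forall>f\<in>edges G. \<forall>x\<in>V.
        S' e (S f x) = (if e = f then P (rng G e) x else (\<lambda>_. 0)))
   \<and> (\<forall>v. regular G v \<longrightarrow> (\<forall>x\<in>V. P v x = (\<lambda>i. \<Sum>e\<in>emits G v. S e (S' e x) i))))"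

definition leavitt_invariant :: "('v, 'e) graph \<Rightarrow> ('a, 'k::field, 'v, 'e) lrep \<Rightarrow> ('a \<Rightarrow> 'k) set \<Rightarrow> bool" where
  "leavitt_invariant G R W \<longleftrightarrow> (case R of (V, P, S, S') \<Rightarrow>
     ksubspace W \<and> W \<subseteq> V
   \<and> (\<forall>v\<in>verts G. P v ` W \<subseteq> W)
   \<and> (\<forall>e\<in>edges G. S e ` W \<subseteq> W \<and> S' e ` W \<subseteq> W))"

definition leavitt_irred :: "('v, 'e) graph \<Rightarrow> ('a, 'k::field, 'v, 'e) lrep \<Rightarrow> bool" where
  "leavitt_irred G R \<longleftrightarrow> leavitt_rep G R \<and> (case R of (V, P, S, S') \<Rightarrow>
     (\<exists>v\<in>verts G. \<exists>x\<in>V. P v x \<noteq> (\<lambda>_. 0))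
   \<and> (\<forall>W. leavitt_invariant G R W \<longrightarrow> W = {\<lambda>_. 0} \<or> W = V))"

definition alg_equiv :: "('v, 'e) graph \<Rightarrow> ('a, 'k::field, 'v, 'e) lrep \<Rightarrow> ('a, 'k, 'v, 'e) lrep \<Rightarrow> bool" where
  "alg_equiv G R1 R2 \<longleftrightarrow> (case R1 of (V, P, S, S') \<Rightarrow> case R2 of (W, Q, T, T') \<Rightarrow>
     (\<exists>U. klinear_on V U \<and> bij_betw U V W
        \<and> (\<forall>v\<in>verts G. \<forall>x\<in>V. U (P v x) = Q v (U x))
        \<and> (\<forall>e\<in>edges G. \<forall>x\<in>V. U (S e x) = T e (U x) \<and> U (S' e x) = T' e (U x))))"

definition leavitt_irred_classes :: "('v, 'e) graph \<Rightarrow> ('a, 'k::field, 'v, 'e) lrep set set" where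
  "leavitt_irred_classes G = {R. leavitt_irred G R} //
     {(R1, R2). leavitt_irred G R1 \<and> leavitt_irred G R2 \<and> alg_equiv G R1 R2}"

text \<open>Hilbert spaces are realised as closed subspaces of l2('a). A *-representation of
  C*(E) is, by the universal property, a Cuntz--Krieger E-family of bounded operators.\<close>

definition l2space :: "('a \<Rightarrow> complex) set" where
  "l2space = {f. (\<lambda>x. (cmod (f x))\<^sup>2) summable_on UNIV}"

definition l2inner :: "('a \<Rightarrow> complex) \<Rightarrow> ('a \<Rightarrow> complex) \<Rightarrow> complex" where
  "l2inner f g = (\<Sum>\<^sub>\<infinity>x. f x * cnj (g x))"

definition l2norm :: "('a \<Rightarrow> complex) \<Rightarrow> real" where
  "l2norm f = sqrt (\<Sum>\<^sub>\<infinity>x. (cmod (f x))\<^sup>2)"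

definition hilbert_subspace :: "('a \<Rightarrow> complex) set \<Rightarrow> bool" where
  "hilbert_subspace H \<longleftrightarrow> H \<subseteq> l2space \<and> ksubspace H
     \<and> (\<forall>X g. (\<forall>n. X n \<in> H) \<longrightarrow> g \<in> l2space \<longrightarrow>
           (\<lambda>n. l2norm (\<lambda>x. X n x - g x)) \<longlonglongrightarrow> 0 \<longrightarrow> g \<in> H)"

definition bounded_op :: "('a \<Rightarrow> complex) set \<Rightarrow> (('a \<Rightarrow> complex) \<Rightarrow> ('a \<Rightarrow> complex)) \<Rightarrow> bool" where
  "bounded_op H T \<longleftrightarrow> kop H T \<and> (\<exists>C. \<forall>f\<in>H. l2norm (T f) \<le> C * l2norm f)"

definition is_adjoint :: "('a \<Rightarrow> complex) set \<Rightarrow> (('a \<Rightarrow> complex) \<Rightarrow> ('a \<Rightarrow> complex))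
    \<Rightarrow> (('a \<Rightarrow> complex) \<Rightarrow> ('a \<Rightarrow> complex)) \<Rightarrow> bool" where
  "is_adjoint H T T' \<longleftrightarrow> (\<forall>f\<in>H. \<forall>g\<in>H. l2inner (T f) g = l2inner f (T' g))"

definition op_le :: "('a \<Rightarrow> complex) set \<Rightarrow> (('a \<Rightarrow> complex) \<Rightarrow> ('a \<Rightarrow> complex))
    \<Rightarrow> (('a \<Rightarrow> complex) \<Rightarrow> ('a \<Rightarrow> complex)) \<Rightarrow> bool" where
  "op_le H A B \<longleftrightarrow> (\<forall>f\<in>H. Im (l2inner (\<lambda>x. B f x - A f x) f) = 0
                         \<and> Re (l2inner (\<lambda>x. B f x - A f x) f) \<ge> 0)"

type_synonym ('a, 'v, 'e) crep = "('a, complex, 'v, 'e) lrep"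

definition cstar_rep :: "('v, 'e) graph \<Rightarrow> ('a, 'v, 'e) crep \<Rightarrow> bool" where
  "cstar_rep G R \<longleftrightarrow> (case R of (H, P, S, S') \<Rightarrow>
     hilbert_subspace H
   \<and> (\<forall>v\<in>verts G. bounded_op H (P v))
   \<and> (\<forall>e\<in>edges G. bounded_op H (S e) \<and> bounded_op H (S' e) \<and> is_adjoint H (S e) (S' e))
   \<and> (\<forall>v\<in>verts G. is_adjoint H (P v) (P v) \<and> (\<forall>f\<in>H. P v (P v f) = P v f))
   \<and> (\<forall>v\<in>verts G. \<forall>w\<in>verts G. v \<noteq> w \<longrightarrow> (\<forall>f\<in>H. P v (P w f) = (\<lambda>_. 0)))
   \<and> (\<forall>e\<in>edges G. \<forall>f\<in>edges G. e \<noteq> f \<longrightarrow> (\<forall>x\<in>H. S' e (S f x) = (\<lambda>_. 0)))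
   \<and> (\<forall>e\<in>edges G. \<forall>x\<in>H. S' e (S e x) = P (rng G e) x)
   \<and> (\<forall>e\<in>edges G. op_le H (\<lambda>x. S e (S' e x)) (P (src G e)))
   \<and> (\<forall>v. regular G v \<longrightarrow> (\<forall>x\<in>H. P v x = (\<lambda>i. \<Sum>e\<in>emits G v. S e (S' e x) i))))"

definition cstar_invariant :: "('v, 'e) graph \<Rightarrow> ('a, 'v, 'e) crep \<Rightarrow> ('a \<Rightarrow> complex) set \<Rightarrow> bool" where
  "cstar_invariant G R K \<longleftrightarrow> hilbert_subspace K \<and> leavitt_invariant G R K"

definition cstar_irred :: "('v, 'e) graph \<Rightarrow> ('a, 'v, 'e) crep \<Rightarrow> bool" where
  "cstar_irred G R \<longleftrightarrow> cstar_rep G R \<and> (case R of (H, P, S, S') \<Rightarrow>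
     (\<exists>v\<in>verts G. \<exists>x\<in>H. P v x \<noteq> (\<lambda>_. 0))
   \<and> (\<forall>K. cstar_invariant G R K \<longrightarrow> K = {\<lambda>_. 0} \<or> K = H))"

definition unitary_equiv :: "('v, 'e) graph \<Rightarrow> ('a, 'v, 'e) crep \<Rightarrow> ('a, 'v, 'e) crep \<Rightarrow> bool" where
  "unitary_equiv G R1 R2 \<longleftrightarrow> (case R1 of (H, P, S, S') \<Rightarrow> case R2 of (K, Q, T, T') \<Rightarrow>
     (\<exists>U. klinear_on H U \<and> bij_betw U H K
        \<and> (\<forall>f\<in>H. \<forall>g\<in>H. l2inner (U f) (U g) = l2inner f g)
        \<and> (\<forall>v\<in>verts G. \<forall>x\<in>H. U (P v x) = Q v (U x))
        \<and> (\<forall>e\<in>edges G. \<forall>x\<in>H. U (S e x) = T e (U x) \<and> U (S' e x) = T' e (U x))))"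

definition cstar_irred_classes :: "('v, 'e) graph \<Rightarrow> ('a, 'v, 'e) crep set set" where
  "cstar_irred_classes G = {R. cstar_irred G R} //
     {(R1, R2). cstar_irred G R1 \<and> cstar_irred G R2 \<and> unitary_equiv G R1 R2}"

end

theory Submission
  imports Defs
begin

fun pstart :: "('v, 'e) graph \<Rightarrow> ('v, 'e) path \<Rightarrow> 'v" where
  "pstart G (PVert v) = v"
| "pstart G (PFin es) = src G (hd es)"
| "pstart G (PInf f) = src G (f 0)"

fun pfirst :: "('v, 'e) path \<Rightarrow> 'e option" where
  "pfirst (PVert v) = None"
| "pfirst (PFin []) = None"
| "pfirst (PFin (e # es)) = Some e"
| "pfirst (PInf f) = Some (f 0)"

fun pcons :: "'e \<Rightarrow> ('v, 'e) path \<Rightarrow> ('v, 'e) path" where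
  "pcons e (PVert v) = PFin [e]"
| "pcons e (PFin es) = PFin (e # es)"
| "pcons e (PInf f) = PInf (case_nat e f)"

lemma pcons_shift: assumes a: "pfirst \<beta> = Some e" shows "pcons e (shift G \<beta>) = \<beta>"
proof (cases \<beta>)
  case (PFin es)
  then obtain f fs where "es = e # fs" using PFin a by (cases es) auto
  then show ?thesis using PFin by (cases fs) auto
next
  case (PInf f)
  then show ?thesis using PInf a by (auto simp: fun_eq_iff split: nat.split)
qed (use a in auto)

lemma shift_pcons: assumes "\<beta> \<noteq> PFin []" "pstart G \<beta> = rng G e" shows "shift G (pcons e \<beta>) = \<beta>"
proof (cases \<beta>)
  case (PFin es)
  then show ?thesis using assms by (cases es) auto
qed (use assms in auto)

lemma bd_cases:
  assumes "\<beta> \<in> boundary G"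
  obtains v where "\<beta> = PVert v" "v \<in> verts G" "singular G v"
  | es where "\<beta> = PFin es" "fin_path G es" "singular G (rng G (last es))"
  | f where "\<beta> = PInf f" "inf_path G f"
  using assms unfolding boundary_def by blast

lemma bd_not_nil: "\<beta> \<in> boundary G \<Longrightarrow> \<beta> \<noteq> PFin []"
  by (auto elim: bd_cases simp: fin_path_def)

lemma bd_start: "wf_graph G \<Longrightarrow> \<beta> \<in> boundary G \<Longrightarrow> pstart G \<beta> \<in> verts G"
  apply (erule bd_cases)
    apply simp
   apply (simp add: fin_path_def wf_graph_def)
   apply (metis hd_in_set subset_iff)
  apply (simp add: inf_path_def wf_graph_def)
  done

lemma bd_first:
  assumes "\<beta> \<in> boundary G" "pfirst \<beta> = Some e"
  shows "e \<in> edges G" "src G e = pstart G \<beta>" "pstart G (shift G \<beta>) = rng G e"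
proof -
  have "e \<in> edges G \<and> src G e = pstart G \<beta> \<and> pstart G (shift G \<beta>) = rng G e"
  proof (rule bd_cases[OF assms(1)])
    fix es assume h: "\<beta> = PFin es" "fin_path G es"
    then obtain fs where fs: "es = e # fs" using assms(2) by (cases es) auto
    show ?thesis
    proof (cases fs)
      case Nil then show ?thesis using h fs by (simp add: fin_path_def)
    next
      case (Cons f gs)
      have "rng G (es ! 0) = src G (es ! Suc 0)" using h(2) fs Cons unfolding fin_path_def by auto
      then show ?thesis using h fs Cons by (simp add: fin_path_def)
    qed
  next
    fix f assume "\<beta> = PInf f" "inf_path G f"
    then show ?thesis using assms(2) by (auto simp: inf_path_def)
  qed (use assms in auto)
  then show "e \<in> edges G" "src G e = pstart G \<beta>" "pstart G (shift G \<beta>) = rng G e" by auto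
qed

lemma bd_nofirst:
  assumes "\<beta> \<in> boundary G" "pfirst \<beta> = None"
  shows "\<beta> = PVert (pstart G \<beta>)" "singular G (pstart G \<beta>)"
proof -
  have "\<beta> = PVert (pstart G \<beta>) \<and> singular G (pstart G \<beta>)"
  proof (rule bd_cases[OF assms(1)])
    fix es assume "\<beta> = PFin es" "fin_path G es"
    then show ?thesis using assms(2) by (cases es) (auto simp: fin_path_def)
  qed (use assms in auto)
  then show "\<beta> = PVert (pstart G \<beta>)" "singular G (pstart G \<beta>)" by auto
qed

lemma bd_shift:
  assumes "wf_graph G" "\<beta> \<in> boundary G"
  shows "shift G \<beta> \<in> boundary G"
proof (rule bd_cases[OF assms(2)])
  fix v assume "\<beta> = PVert v" "v \<in> verts G" "singular G v"
  then show ?thesis using assms by simp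
next
  fix es assume h: "\<beta> = PFin es" "fin_path G es" "singular G (rng G (last es))"
  then obtain e fs where es: "es = e # fs" by (cases es) (auto simp: fin_path_def)
  show ?thesis
  proof (cases fs)
    case Nil
    then have "e \<in> edges G" using h es by (auto simp: fin_path_def)
    then have "rng G e \<in> verts G" using assms(1) by (auto simp: wf_graph_def)
    then show ?thesis using h es Nil by (auto simp: boundary_def)
  next
    case (Cons f gs)
    have "fin_path G fs"
      using h(2) unfolding fin_path_def es
      by (auto simp: Cons)
    then show ?thesis using h es Cons by (auto simp: boundary_def)
  qed
next
  fix f assume "\<beta> = PInf f" "inf_path G f"
  then show ?thesis by (auto simp: boundary_def inf_path_def)
qed

lemma bd_pcons:
  assumes "wf_graph G" "\<beta> \<in> boundary G" "e \<in> edges G" "pstart G \<beta> = rng G e"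
  shows "pcons e \<beta> \<in> boundary G"
proof (rule bd_cases[OF assms(2)])
  fix v assume "\<beta> = PVert v" "v \<in> verts G" "singular G v"
  then show ?thesis using assms by (auto simp: boundary_def fin_path_def)
next
  fix es assume h: "\<beta> = PFin es" "fin_path G es" "singular G (rng G (last es))"
  have "fin_path G (e # es)"
    using h(2) assms(3,4) h(1) unfolding fin_path_def
    by (auto simp: nth_Cons' hd_conv_nth)
  then show ?thesis using h by (auto simp: boundary_def fin_path_def)
next
  fix f assume "\<beta> = PInf f" "inf_path G f"
  then have "inf_path G (case_nat e f)" using assms(3,4)
    by (auto simp: inf_path_def split: nat.split)
  then show ?thesis using \<open>\<beta> = PInf f\<close> by (auto simp: boundary_def)
qed


definition strel :: "('v, 'e) graph \<Rightarrow> (('v, 'e) path \<times> ('v, 'e) path) set" where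
  "strel G = {(\<alpha>, \<beta>). \<alpha> \<in> boundary G \<and> \<beta> \<in> boundary G \<and> shift_tail_equiv G \<alpha> \<beta>}"

lemma funpow_comm_apply: "(f ^^ m) ((f ^^ n) x) = (f ^^ n) ((f ^^ m) x)"
  by (metis add.commute funpow_add o_apply)

lemma strel_equiv: "equiv (boundary G) (strel G)"
proof (rule equivI)
  show "refl_on (boundary G) (strel G)"
    unfolding refl_on_def strel_def shift_tail_equiv_def
    by (auto intro: exI[of _ 0])
  show "sym (strel G)"
    unfolding sym_def strel_def shift_tail_equiv_def by (auto, metis)
  show "trans (strel G)"
    unfolding trans_def strel_def shift_tail_equiv_def
  proof (clarsimp)
    fix x y z m n p q
    assume h: "(shift G ^^ m) x = (shift G ^^ n) y" "(shift G ^^ p) y = (shift G ^^ q) z"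
    have "(shift G ^^ (p + m)) x = (shift G ^^ p) ((shift G ^^ n) y)"
      by (simp add: funpow_add h(1))
    also have "\<dots> = (shift G ^^ n) ((shift G ^^ q) z)" using h(2) funpow_comm_apply by metis
    also have "\<dots> = (shift G ^^ (n + q)) z" by (simp add: funpow_add)
    finally show "\<exists>m n. (shift G ^^ m) x = (shift G ^^ n) z" by blast
  qed
qed (auto simp: strel_def)

lemma stc_def': "shift_tail_classes G = boundary G // strel G"
  unfolding shift_tail_classes_def strel_def by simp

locale stc =
  fixes G :: "('v, 'e) graph" and C :: "('v, 'e) path set"
  assumes wf: "wf_graph G" and cls: "C \<in> shift_tail_classes G"
begin

lemma obt: obtains \<alpha> where "\<alpha> \<in> boundary G" "C = strel G `` {\<alpha>}"
  using cls unfolding stc_def' quotient_def by blast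

lemma sub: "C \<subseteq> boundary G"
proof -
  obtain a where "a \<in> boundary G" "C = strel G `` {a}" using obt by blast
  then show ?thesis by (auto simp: strel_def)
qed

lemma ne: "C \<noteq> {}"
proof -
  obtain a where "a \<in> boundary G" "C = strel G `` {a}" using obt by blast
  then show ?thesis using equiv_class_self[OF strel_equiv] by blast
qed

lemma mem_rel: "\<alpha> \<in> C \<Longrightarrow> \<beta> \<in> C \<Longrightarrow> (\<alpha>, \<beta>) \<in> strel G"
proof -
  assume h: "\<alpha> \<in> C" "\<beta> \<in> C"
  obtain a where "a \<in> boundary G" "C = strel G `` {a}" using obt by blast
  then have "(a, \<alpha>) \<in> strel G" "(a, \<beta>) \<in> strel G" using h by auto
  then show ?thesis using strel_equiv unfolding equiv_def sym_def trans_def by blast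
qed

lemma equiv_mem: "\<alpha> \<in> C \<Longrightarrow> \<beta> \<in> C \<Longrightarrow> shift_tail_equiv G \<alpha> \<beta>"
  using mem_rel by (auto simp: strel_def)

lemma closed: "\<alpha> \<in> C \<Longrightarrow> (\<alpha>, \<beta>) \<in> strel G \<Longrightarrow> \<beta> \<in> C"
proof -
  assume h: "\<alpha> \<in> C" "(\<alpha>, \<beta>) \<in> strel G"
  obtain a where "a \<in> boundary G" "C = strel G `` {a}" using obt by blast
  then show ?thesis using h strel_equiv unfolding equiv_def trans_def by blast
qed

lemma shift_in: "\<beta> \<in> C \<Longrightarrow> shift G \<beta> \<in> C"
proof -
  assume b: "\<beta> \<in> C"
  then have bd: "\<beta> \<in> boundary G" using sub by auto
  have "(shift G ^^ 1) \<beta> = (shift G ^^ 0) (shift G \<beta>)" by simp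
  then have "(\<beta>, shift G \<beta>) \<in> strel G"
    unfolding strel_def shift_tail_equiv_def
    using bd bd_shift[OF wf bd] by blast
  then show ?thesis using closed b by blast
qed

lemma pcons_in: "\<beta> \<in> C \<Longrightarrow> e \<in> edges G \<Longrightarrow> pstart G \<beta> = rng G e \<Longrightarrow> pcons e \<beta> \<in> C"
proof -
  assume b: "\<beta> \<in> C" "e \<in> edges G" "pstart G \<beta> = rng G e"
  then have bd: "\<beta> \<in> boundary G" using sub by auto
  have sh: "shift G (pcons e \<beta>) = \<beta>" by (rule shift_pcons[OF bd_not_nil[OF bd] b(3)])
  have "(shift G ^^ 0) \<beta> = (shift G ^^ 1) (pcons e \<beta>)" using sh by simp
  then have "shift_tail_equiv G \<beta> (pcons e \<beta>)" unfolding shift_tail_equiv_def by blast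
  then have "(\<beta>, pcons e \<beta>) \<in> strel G"
    unfolding strel_def using bd bd_pcons[OF wf bd b(2,3)] by simp
  then show ?thesis using closed b by blast
qed

lemma funpow_shift_in: "\<beta> \<in> C \<Longrightarrow> (shift G ^^ n) \<beta> \<in> C"
  by (induction n) (auto simp: shift_in)

end

lemma stc_eq: "stc G C \<Longrightarrow> stc G D \<Longrightarrow> \<alpha> \<in> C \<Longrightarrow> \<alpha> \<in> D \<Longrightarrow> C = D"
  using quotient_disj[OF strel_equiv] unfolding stc_def stc_def' by blast

lemma stc_of: "wf_graph G \<Longrightarrow> \<alpha> \<in> boundary G \<Longrightarrow> stc G (strel G `` {\<alpha>}) \<and> \<alpha> \<in> strel G `` {\<alpha>}"
  unfolding stc_def stc_def'
  using equiv_class_self[OF strel_equiv] by (auto intro: quotientI)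


definition Pc :: "('v, 'e) graph \<Rightarrow> ('v, 'e) path set \<Rightarrow> 'v \<Rightarrow> (('v, 'e) path \<Rightarrow> 'k::zero) \<Rightarrow> (('v, 'e) path \<Rightarrow> 'k)" where
  "Pc G C v x = (\<lambda>\<beta>. if \<beta> \<in> C \<and> pstart G \<beta> = v then x \<beta> else 0)"

definition Sc :: "('v, 'e) graph \<Rightarrow> ('v, 'e) path set \<Rightarrow> 'e \<Rightarrow> (('v, 'e) path \<Rightarrow> 'k::zero) \<Rightarrow> (('v, 'e) path \<Rightarrow> 'k)" where
  "Sc G C e x = (\<lambda>\<beta>. if \<beta> \<in> C \<and> pfirst \<beta> = Some e then x (shift G \<beta>) else 0)"

definition Sc' :: "('v, 'e) graph \<Rightarrow> ('v, 'e) path set \<Rightarrow> 'e \<Rightarrow> (('v, 'e) path \<Rightarrow> 'k::zero) \<Rightarrow> (('v, 'e) path \<Rightarrow> 'k)" where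
  "Sc' G C e x = (\<lambda>\<beta>. if \<beta> \<in> C \<and> pstart G \<beta> = rng G e then x (pcons e \<beta>) else 0)"

definition mult :: "('a \<Rightarrow> 'k::times) \<Rightarrow> ('a \<Rightarrow> 'k) \<Rightarrow> ('a \<Rightarrow> 'k)" where
  "mult m x = (\<lambda>\<beta>. m \<beta> * x \<beta>)"

definition supp_on :: "'a set \<Rightarrow> ('a \<Rightarrow> 'k::zero) \<Rightarrow> bool" where
  "supp_on C x \<longleftrightarrow> (\<forall>\<beta>. x \<beta> \<noteq> 0 \<longrightarrow> \<beta> \<in> C)"

definition delta :: "'a \<Rightarrow> ('a \<Rightarrow> 'k::{zero,one})" where
  "delta \<alpha> = (\<lambda>\<beta>. if \<beta> = \<alpha> then 1 else 0)"

inductive realizable :: "('v, 'e) graph \<Rightarrow> (('v, 'e) path \<Rightarrow> 'k::field) \<Rightarrow> bool" for G where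
  r_one: "realizable G (\<lambda>_. 1)"
| r_start: "v \<in> verts G \<Longrightarrow> realizable G (\<lambda>\<beta>. if pstart G \<beta> = v then 1 else 0)"
| r_wrap: "realizable G m \<Longrightarrow> e \<in> edges G \<Longrightarrow>
     realizable G (\<lambda>\<beta>. if pfirst \<beta> = Some e then m (shift G \<beta>) else 0)"
| r_mul: "realizable G m1 \<Longrightarrow> realizable G m2 \<Longrightarrow> realizable G (\<lambda>\<beta>. m1 \<beta> * m2 \<beta>)"
| r_diff: "realizable G m1 \<Longrightarrow> realizable G m2 \<Longrightarrow> realizable G (\<lambda>\<beta>. m1 \<beta> - m2 \<beta>)"

context stc
begin

lemma wrap_eq:
  fixes x :: "('v, 'e) path \<Rightarrow> 'k::field"
  assumes "supp_on C x"
  shows "Sc G C e (mult m (Sc' G C e x)) = mult (\<lambda>\<beta>. if pfirst \<beta> = Some e then m (shift G \<beta>) else 0) x"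
proof (rule ext)
  fix \<beta>
  show "Sc G C e (mult m (Sc' G C e x)) \<beta> = mult (\<lambda>\<beta>. if pfirst \<beta> = Some e then m (shift G \<beta>) else 0) x \<beta>"
  proof (cases "\<beta> \<in> C \<and> pfirst \<beta> = Some e")
    case True
    then have bd: "\<beta> \<in> boundary G" using sub by auto
    have "shift G \<beta> \<in> C" using True shift_in by auto
    moreover have "pstart G (shift G \<beta>) = rng G e" using bd_first[OF bd] True by auto
    moreover have "pcons e (shift G \<beta>) = \<beta>" using pcons_shift True by auto
    ultimately show ?thesis using True by (simp add: Sc_def Sc'_def mult_def)
  next
    case False
    then have "x \<beta> = 0 \<or> pfirst \<beta> \<noteq> Some e" using assms by (auto simp: supp_on_def)
    then show ?thesis using False by (auto simp: Sc_def mult_def)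
  qed
qed

lemma real_closed:
  assumes "realizable G m"
    and W: "\<forall>x\<in>W. supp_on C x"
    "\<forall>v\<in>verts G. \<forall>x\<in>W. Pc G C v x \<in> W"
    "\<forall>e\<in>edges G. \<forall>x\<in>W. Sc G C e x \<in> W \<and> Sc' G C e x \<in> W"
    "\<forall>x\<in>W. \<forall>y\<in>W. (\<lambda>i. x i - y i) \<in> W"
  shows "\<forall>x\<in>W. mult m x \<in> W"
  using assms(1)
proof induction
  case r_one
  then show ?case by (simp add: mult_def)
next
  case (r_start v)
  { fix x assume x: "x \<in> W"
    have "mult (\<lambda>\<beta>. if pstart G \<beta> = v then 1 else 0) x = Pc G C v x"
      using W(1) x by (auto simp: mult_def Pc_def supp_on_def fun_eq_iff)
    then have "mult (\<lambda>\<beta>. if pstart G \<beta> = v then 1 else 0) x \<in> W" using W(2) r_start x by auto }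
  then show ?case by blast
next
  case (r_wrap m e)
  { fix x assume x: "x \<in> W"
    have "Sc' G C e x \<in> W" using W(3) r_wrap x by auto
    then have "mult m (Sc' G C e x) \<in> W" using r_wrap by auto
    then have "Sc G C e (mult m (Sc' G C e x)) \<in> W" using W(3) r_wrap by auto
    moreover have "Sc G C e (mult m (Sc' G C e x)) = mult (\<lambda>\<beta>. if pfirst \<beta> = Some e then m (shift G \<beta>) else 0) x"
      by (rule wrap_eq) (use W(1) x in auto)
    ultimately have "mult (\<lambda>\<beta>. if pfirst \<beta> = Some e then m (shift G \<beta>) else 0) x \<in> W"
      by simp }
  then show ?case by blast
next
  case (r_mul m1 m2)
  { fix x assume x: "x \<in> W"
    have "mult (\<lambda>\<beta>. m1 \<beta> * m2 \<beta>) x = mult m1 (mult m2 x)" by (simp add: mult_def mult.assoc)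
    then have "mult (\<lambda>\<beta>. m1 \<beta> * m2 \<beta>) x \<in> W" using r_mul x by auto }
  then show ?case by blast
next
  case (r_diff m1 m2)
  { fix x assume x: "x \<in> W"
    have "mult (\<lambda>\<beta>. m1 \<beta> - m2 \<beta>) x = (\<lambda>i. mult m1 x i - mult m2 x i)" by (simp add: mult_def algebra_simps)
    then have "mult (\<lambda>\<beta>. m1 \<beta> - m2 \<beta>) x \<in> W" using r_diff x W(4) by auto }
  then show ?case by blast
qed

end

lemma real_intertwine:
  assumes c1: "stc G C1" and c2: "stc G C2" and "realizable G m"
    and W: "\<forall>x\<in>V1. supp_on C1 x"
    "\<forall>v\<in>verts G. \<forall>x\<in>V1. Pc G C1 v x \<in> V1"
    "\<forall>e\<in>edges G. \<forall>x\<in>V1. Sc G C1 e x \<in> V1 \<and> Sc' G C1 e x \<in> V1"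
    "\<forall>x\<in>V1. \<forall>y\<in>V1. (\<lambda>i. x i - y i) \<in> V1"
    and V2: "\<forall>x\<in>V1. supp_on C2 (U x)"
    and Ulin: "\<forall>x\<in>V1. \<forall>y\<in>V1. U (\<lambda>i. x i - y i) = (\<lambda>i. U x i - U y i)"
    and Ui: "\<forall>v\<in>verts G. \<forall>x\<in>V1. U (Pc G C1 v x) = Pc G C2 v (U x)"
    "\<forall>e\<in>edges G. \<forall>x\<in>V1. U (Sc G C1 e x) = Sc G C2 e (U x) \<and> U (Sc' G C1 e x) = Sc' G C2 e (U x)"
  shows "\<forall>x\<in>V1. U (mult m x) = mult m (U x)"
  using assms(3)
proof induction
  case r_one
  then show ?case by (simp add: mult_def)
next
  case (r_start v)
  { fix x assume x: "x \<in> V1"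
    have "mult (\<lambda>\<beta>. if pstart G \<beta> = v then 1 else 0) x = Pc G C1 v x"
      using W(1) x by (auto simp: mult_def Pc_def supp_on_def fun_eq_iff)
    moreover have "mult (\<lambda>\<beta>. if pstart G \<beta> = v then 1 else 0) (U x) = Pc G C2 v (U x)"
      using V2 x by (auto simp: mult_def Pc_def supp_on_def fun_eq_iff)
    ultimately have "U (mult (\<lambda>\<beta>. if pstart G \<beta> = v then 1 else 0) x) = mult (\<lambda>\<beta>. if pstart G \<beta> = v then 1 else 0) (U x)"
      using Ui(1) r_start x by simp }
  then show ?case by blast
next
  case (r_wrap m e)
  { fix x assume x: "x \<in> V1"
    have s': "Sc' G C1 e x \<in> V1" using W(3) r_wrap x by auto
    then have mS: "mult m (Sc' G C1 e x) \<in> V1" using stc.real_closed[OF c1 r_wrap(1) W] by auto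
    have "U (mult (\<lambda>\<beta>. if pfirst \<beta> = Some e then m (shift G \<beta>) else 0) x)
        = U (Sc G C1 e (mult m (Sc' G C1 e x)))"
      by (subst stc.wrap_eq[OF c1]) (use W(1) x in auto)
    also have "\<dots> = Sc G C2 e (U (mult m (Sc' G C1 e x)))" using Ui(2) mS r_wrap by auto
    also have "\<dots> = Sc G C2 e (mult m (U (Sc' G C1 e x)))" using r_wrap s' by auto
    also have "\<dots> = Sc G C2 e (mult m (Sc' G C2 e (U x)))" using Ui(2) r_wrap x by auto
    also have "\<dots> = mult (\<lambda>\<beta>. if pfirst \<beta> = Some e then m (shift G \<beta>) else 0) (U x)"
      by (subst stc.wrap_eq[OF c2]) (use V2 x in auto)
    finally have "U (mult (\<lambda>\<beta>. if pfirst \<beta> = Some e then m (shift G \<beta>) else 0) x) =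
       mult (\<lambda>\<beta>. if pfirst \<beta> = Some e then m (shift G \<beta>) else 0) (U x)" . }
  then show ?case by blast
next
  case (r_mul m1 m2)
  { fix x assume x: "x \<in> V1"
    have "mult m2 x \<in> V1" using stc.real_closed[OF c1 r_mul(2) W] x by auto
    then have "U (mult (\<lambda>\<beta>. m1 \<beta> * m2 \<beta>) x) = mult (\<lambda>\<beta>. m1 \<beta> * m2 \<beta>) (U x)"
      using r_mul x by (simp add: mult_def mult.assoc) }
  then show ?case by blast
next
  case (r_diff m1 m2)
  { fix x assume x: "x \<in> V1"
    have "mult m1 x \<in> V1" "mult m2 x \<in> V1" using stc.real_closed[OF c1 _ W] r_diff x by auto
    moreover have "mult (\<lambda>\<beta>. m1 \<beta> - m2 \<beta>) x = (\<lambda>i. mult m1 x i - mult m2 x i)" by (simp add: mult_def algebra_simps)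
    ultimately have "U (mult (\<lambda>\<beta>. m1 \<beta> - m2 \<beta>) x) = (\<lambda>i. U (mult m1 x) i - U (mult m2 x) i)"
      using Ulin by simp
    also have "\<dots> = (\<lambda>i. mult m1 (U x) i - mult m2 (U x) i)" using r_diff x by simp
    finally have "U (mult (\<lambda>\<beta>. m1 \<beta> - m2 \<beta>) x) = mult (\<lambda>\<beta>. m1 \<beta> - m2 \<beta>) (U x)"
      by (simp add: mult_def algebra_simps) }
  then show ?case by blast
qed


definition pref :: "('v, 'e) graph \<Rightarrow> 'e list \<Rightarrow> ('v, 'e) path \<Rightarrow> bool" where
  "pref G es \<beta> \<longleftrightarrow> (\<forall>i<length es. pfirst ((shift G ^^ i) \<beta>) = Some (es ! i))"

definition mpre :: "('v, 'e) graph \<Rightarrow> 'e list \<Rightarrow> (('v, 'e) path \<Rightarrow> 'k::zero) \<Rightarrow> ('v, 'e) path \<Rightarrow> 'k" where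
  "mpre G es m \<beta> = (if pref G es \<beta> then m ((shift G ^^ length es) \<beta>) else 0)"

lemma pref_Cons: "pref G (e # es) \<beta> \<longleftrightarrow> pfirst \<beta> = Some e \<and> pref G es (shift G \<beta>)"
proof
  assume h: "pref G (e # es) \<beta>"
  have "pfirst \<beta> = Some e" using h[unfolded pref_def, rule_format, of 0] by simp
  moreover have "pref G es (shift G \<beta>)"
    unfolding pref_def
  proof (intro allI impI)
    fix i assume "i < length es"
    then show "pfirst ((shift G ^^ i) (shift G \<beta>)) = Some (es ! i)"
      using h[unfolded pref_def, rule_format, of "Suc i"] by (simp add: funpow_swap1)
  qed
  ultimately show "pfirst \<beta> = Some e \<and> pref G es (shift G \<beta>)" ..
next
  assume h: "pfirst \<beta> = Some e \<and> pref G es (shift G \<beta>)"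
  show "pref G (e # es) \<beta>"
    unfolding pref_def
  proof (intro allI impI)
    fix i assume "i < length (e # es)"
    then show "pfirst ((shift G ^^ i) \<beta>) = Some ((e # es) ! i)"
      using h by (cases i) (auto simp: pref_def funpow_swap1)
  qed
qed

lemma mpre_Cons: "mpre G (e # es) m = (\<lambda>\<beta>. if pfirst \<beta> = Some e then mpre G es m (shift G \<beta>) else 0)"
  by (auto simp: fun_eq_iff mpre_def pref_Cons funpow_swap1)

lemma mpre_real: "realizable G m \<Longrightarrow> set es \<subseteq> edges G \<Longrightarrow> realizable G (mpre G es m)"
proof (induction es)
  case Nil
  then show ?case by (simp add: mpre_def pref_def)
next
  case (Cons e es)
  then show ?case unfolding mpre_Cons by (auto intro: realizable.r_wrap)
qed

lemma funpow_shift_PInf: "(shift G ^^ i) (PInf g) = PInf (\<lambda>k. g (k + i))"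
  by (induction i) auto

lemma funpow_shift_PFin_end: "pfirst ((shift G ^^ length es) (PFin es)) = None"
proof (induction es)
  case Nil then show ?case by simp
next
  case (Cons e es)
  show ?case
  proof (cases es)
    case Nil then show ?thesis by simp
  next
    case (Cons f fs)
    then show ?thesis using Cons.IH by (simp add: funpow_swap1)
  qed
qed

lemma funpow_shift_PFin_last: "es \<noteq> [] \<Longrightarrow> (shift G ^^ length es) (PFin es) = PVert (rng G (last es))"
proof (induction es)
  case Nil then show ?case by simp
next
  case (Cons e es)
  show ?case
  proof (cases es)
    case Nil then show ?thesis by simp
  next
    case (Cons f fs)
    then show ?thesis using Cons.IH by (simp add: funpow_swap1)
  qed
qed

lemma funpow_shift_PFin_drop: "i < length es \<Longrightarrow> (shift G ^^ i) (PFin es) = PFin (drop i es)"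
proof (induction i)
  case 0 then show ?case by simp
next
  case (Suc i)
  then have eq: "(shift G ^^ i) (PFin es) = PFin (drop i es)" by simp
  have d: "drop i es = es ! i # drop (Suc i) es" "drop (Suc i) es = es ! Suc i # drop (Suc (Suc i)) es"
    using Suc.prems by (simp_all add: Cons_nth_drop_Suc)
  show ?case by (simp add: eq d)
qed

lemma pref_PFin: "pref G es (PFin es)"
  unfolding pref_def
proof (intro allI impI)
  fix i assume i: "i < length es"
  then have "drop i es = es ! i # drop (Suc i) es" by (simp add: Cons_nth_drop_Suc)
  moreover have "(shift G ^^ i) (PFin es) = PFin (drop i es)" by (rule funpow_shift_PFin_drop[OF i])
  ultimately show "pfirst ((shift G ^^ i) (PFin es)) = Some (es ! i)" by simp
qed

lemma pref_unique:
  "pref G es \<beta> \<Longrightarrow> pref G es \<beta>' \<Longrightarrow> (shift G ^^ length es) \<beta> = (shift G ^^ length es) \<beta>' \<Longrightarrow> \<beta> = \<beta>'"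
proof (induction es arbitrary: \<beta> \<beta>')
  case Nil then show ?case by simp
next
  case (Cons e es)
  have f: "pfirst \<beta> = Some e" "pfirst \<beta>' = Some e" "pref G es (shift G \<beta>)" "pref G es (shift G \<beta>')"
    using Cons.prems by (auto simp: pref_Cons)
  have "shift G \<beta> = shift G \<beta>'"
    using Cons.IH[OF f(3,4)] Cons.prems(3) by (simp add: funpow_swap1)
  then show ?case using pcons_shift[OF f(1), of G] pcons_shift[OF f(2), of G] by metis
qed

lemma diverge:
  assumes "\<beta> \<noteq> PInf g"
  shows "\<exists>i. pfirst ((shift G ^^ i) \<beta>) \<noteq> Some (g i)"
proof (cases \<beta>)
  case (PVert v) then show ?thesis by (auto intro: exI[of _ 0])
next
  case (PFin es) then show ?thesis using funpow_shift_PFin_end[where G=G and es=es] by (metis option.distinct(1))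
next
  case (PInf h)
  then obtain i where "h i \<noteq> g i" using assms by auto
  then show ?thesis using PInf by (auto simp: funpow_shift_PInf intro!: exI[of _ i])
qed

lemma bd_funpow: "wf_graph G \<Longrightarrow> \<beta> \<in> boundary G \<Longrightarrow> (shift G ^^ n) \<beta> \<in> boundary G"
  by (induction n) (auto simp: bd_shift)

lemma mpre_01: "(\<forall>\<beta>. m \<beta> = 0 \<or> m \<beta> = 1) \<Longrightarrow> mpre G es m \<beta> = 0 \<or> mpre G es m \<beta> = 1"
  by (auto simp: mpre_def)

lemma real_indic_first:
  assumes "e \<in> edges G"
  shows "realizable G (\<lambda>\<beta>. if pfirst \<beta> = Some e then (1::'k::field) else 0)"
  using realizable.r_wrap[OF realizable.r_one assms, where 'k='k] by simp

lemma real_base: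
  assumes "finite F" "F \<subseteq> edges G" "w \<in> verts G"
  shows "realizable G (\<lambda>\<gamma>. if pstart G \<gamma> = w \<and> (\<forall>e\<in>F. pfirst \<gamma> \<noteq> Some e) then (1::'k::field) else 0)"
  using assms(1,2)
proof (induction F rule: finite_induct)
  case empty
  then show ?case using realizable.r_start[OF assms(3)] by simp
next
  case (insert e F)
  have a: "realizable G (\<lambda>\<gamma>. if pstart G \<gamma> = w \<and> (\<forall>e\<in>F. pfirst \<gamma> \<noteq> Some e) then (1::'k) else 0)"
    using insert by auto
  have b: "realizable G (\<lambda>\<gamma>. 1 - (if pfirst \<gamma> = Some e then (1::'k) else 0))"
    using realizable.r_diff[OF realizable.r_one real_indic_first] insert by auto
  have "(\<lambda>\<gamma>. if pstart G \<gamma> = w \<and> (\<forall>e'\<in>insert e F. pfirst \<gamma> \<noteq> Some e') then (1::'k) else 0)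
      = (\<lambda>\<gamma>. (if pstart G \<gamma> = w \<and> (\<forall>e\<in>F. pfirst \<gamma> \<noteq> Some e) then (1::'k) else 0) *
              (1 - (if pfirst \<gamma> = Some e then (1::'k) else 0)))"
    by (auto simp: fun_eq_iff)
  then show ?case using realizable.r_mul[OF a b] by simp
qed

lemma separate:
  assumes wf: "wf_graph G" and a: "\<alpha> \<in> boundary G" and T: "finite T" "T \<subseteq> boundary G"
  shows "\<exists>m::('v, 'e) path \<Rightarrow> 'k::field. realizable G m \<and> m \<alpha> = 1 \<and> (\<forall>\<beta>\<in>T. \<beta> \<noteq> \<alpha> \<longrightarrow> m \<beta> = 0)
     \<and> (\<forall>\<beta>. m \<beta> = 0 \<or> m \<beta> = 1)"
proof (cases "\<exists>g. \<alpha> = PInf g")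
  case True
  then obtain g where g: "\<alpha> = PInf g" by blast
  then have ip: "inf_path G g" using a by (auto elim: bd_cases)
  define I where "I \<beta> = (SOME i. pfirst ((shift G ^^ i) \<beta>) \<noteq> Some (g i))" for \<beta>
  have I: "pfirst ((shift G ^^ I \<beta>) \<beta>) \<noteq> Some (g (I \<beta>))" if "\<beta> \<noteq> \<alpha>" for \<beta>
    unfolding I_def using diverge[of \<beta> g G] that g by (rule_tac someI_ex) auto
  define N where "N = Suc (Max (I ` T))"
  define es where "es = map g [0..<N]"
  have es_e: "set es \<subseteq> edges G" using ip by (auto simp: es_def inf_path_def)
  define m where "m = mpre G es (\<lambda>_. 1::'k)"
  have "realizable G m" unfolding m_def by (rule mpre_real[OF realizable.r_one es_e])
  moreover have "m \<alpha> = 1"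
    unfolding m_def mpre_def pref_def es_def g by (simp add: funpow_shift_PInf)
  moreover have "m \<beta> = 0" if "\<beta> \<in> T" "\<beta> \<noteq> \<alpha>" for \<beta>
  proof -
    have "I \<beta> < N" using that T(1) unfolding N_def by (simp add: le_imp_less_Suc)
    then have "\<not> pref G es \<beta>" using I[OF that(2)] unfolding pref_def es_def by auto
    then show ?thesis unfolding m_def mpre_def by simp
  qed
  moreover have "\<forall>\<beta>. m \<beta> = 0 \<or> m \<beta> = 1" unfolding m_def by (intro allI mpre_01) auto
  ultimately show ?thesis by blast
next
  case False
  obtain es w where es: "pref G es \<alpha>" "(shift G ^^ length es) \<alpha> = PVert w" "set es \<subseteq> edges G" "w \<in> verts G"
  proof (rule bd_cases[OF a])
    fix v assume "\<alpha> = PVert v" "v \<in> verts G" "singular G v"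
    then show thesis using that[of "[]" v] by (simp add: pref_def)
  next
    fix fs assume h: "\<alpha> = PFin fs" "fin_path G fs" "singular G (rng G (last fs))"
    have "fs \<noteq> []" "set fs \<subseteq> edges G" using h(2) by (auto simp: fin_path_def)
    then have "last fs \<in> edges G" by auto
    then have "rng G (last fs) \<in> verts G" using wf by (auto simp: wf_graph_def)
    then show thesis using that[of fs "rng G (last fs)"] h pref_PFin funpow_shift_PFin_last
      \<open>fs \<noteq> []\<close> \<open>set fs \<subseteq> edges G\<close> by metis
  next
    fix f assume "\<alpha> = PInf f" then show thesis using False by auto
  qed
  define L where "L = length es"
  define F where "F = (\<lambda>\<beta>. the (pfirst ((shift G ^^ L) \<beta>))) ` T \<inter> edges G"
  have F: "finite F" "F \<subseteq> edges G" using T unfolding F_def by auto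
  define m0 where "m0 = (\<lambda>\<gamma>. if pstart G \<gamma> = w \<and> (\<forall>e\<in>F. pfirst \<gamma> \<noteq> Some e) then (1::'k) else 0)"
  define m where "m = mpre G es m0"
  have "realizable G m" unfolding m_def m0_def
    by (rule mpre_real[OF real_base[OF F es(4)] es(3)])
  moreover have "m \<alpha> = 1" unfolding m_def mpre_def m0_def using es by simp
  moreover have "m \<beta> = 0" if "\<beta> \<in> T" "\<beta> \<noteq> \<alpha>" for \<beta>
  proof (cases "pref G es \<beta>")
    case False then show ?thesis unfolding m_def mpre_def by simp
  next
    case True
    define \<gamma> where "\<gamma> = (shift G ^^ L) \<beta>"
    have gb: "\<gamma> \<in> boundary G" unfolding \<gamma>_def using bd_funpow[OF wf] T that by auto
    have "m0 \<gamma> = 0"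
    proof (cases "pfirst \<gamma>")
      case None
      then have "\<gamma> = PVert (pstart G \<gamma>)" using bd_nofirst[OF gb] by auto
      moreover have "\<gamma> \<noteq> PVert w"
        using pref_unique[OF True es(1)] es(2) that(2) unfolding \<gamma>_def L_def by auto
      ultimately have "pstart G \<gamma> \<noteq> w" by metis
      then show ?thesis unfolding m0_def by simp
    next
      case (Some e)
      then have "e \<in> edges G" using bd_first[OF gb] by auto
      then have "e \<in> F" unfolding F_def using that(1) Some \<gamma>_def by force
      then show ?thesis unfolding m0_def using Some by auto
    qed
    then show ?thesis unfolding m_def mpre_def using True \<gamma>_def L_def by simp
  qed
  moreover have "\<forall>\<beta>. m \<beta> = 0 \<or> m \<beta> = 1" unfolding m_def by (intro allI mpre_01) (auto simp: m0_def)
  ultimately show ?thesis by blast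
qed


lemma pstart_pcons[simp]: "pstart G (pcons e \<beta>) = src G e"
  by (cases \<beta>) auto

lemma pfirst_pcons[simp]: "pfirst (pcons e \<beta>) = Some e"
  by (cases \<beta>) auto

context stc
begin

lemma shift_pcons_C: "\<beta> \<in> C \<Longrightarrow> pstart G \<beta> = rng G e \<Longrightarrow> shift G (pcons e \<beta>) = \<beta>"
proof -
  assume h: "\<beta> \<in> C" "pstart G \<beta> = rng G e"
  then have "\<beta> \<in> boundary G" using sub by auto
  then show ?thesis using shift_pcons[OF bd_not_nil h(2)] by simp
qed

lemma first_facts: "\<beta> \<in> C \<Longrightarrow> pfirst \<beta> = Some e \<Longrightarrow>
   e \<in> edges G \<and> src G e = pstart G \<beta> \<and> pstart G (shift G \<beta>) = rng G e \<and> shift G \<beta> \<in> C \<and> pcons e (shift G \<beta>) = \<beta>"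
proof -
  assume h: "\<beta> \<in> C" "pfirst \<beta> = Some e"
  then have bd: "\<beta> \<in> boundary G" using sub by auto
  show ?thesis using bd_first[OF bd h(2)] shift_in[OF h(1)] pcons_shift[OF h(2)] by simp
qed

lemma id_PP: "Pc G C v (Pc G C w x) = (if v = w then Pc G C v x else (\<lambda>_. 0))"
  by (auto simp: Pc_def fun_eq_iff)

lemma id_PS: "Pc G C (src G e) (Sc G C e x) = Sc G C e x"
  by (auto simp: Pc_def Sc_def fun_eq_iff dest: first_facts)

lemma id_SP: "Sc G C e (Pc G C (rng G e) x) = Sc G C e x"
  by (auto simp: Pc_def Sc_def fun_eq_iff dest: first_facts)

lemma id_PS': "Pc G C (rng G e) (Sc' G C e x) = Sc' G C e x"
  by (auto simp: Pc_def Sc'_def fun_eq_iff)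

lemma id_S'P: "e \<in> edges G \<Longrightarrow> Sc' G C e (Pc G C (src G e) x) = Sc' G C e x"
  by (auto simp: Pc_def Sc'_def fun_eq_iff intro: pcons_in)

lemma id_S'S: "e \<in> edges G \<Longrightarrow> Sc' G C e (Sc G C f x) = (if e = f then Pc G C (rng G e) x else (\<lambda>_. 0))"
  by (auto simp: Pc_def Sc'_def Sc_def fun_eq_iff shift_pcons_C intro: pcons_in)

lemma id_SS': "Sc G C e (Sc' G C e x) = (\<lambda>\<beta>. if \<beta> \<in> C \<and> pfirst \<beta> = Some e then x \<beta> else 0)"
  by (auto simp: Sc'_def Sc_def fun_eq_iff dest: first_facts)

lemma id_reg:
  assumes "regular G v"
  shows "Pc G C v x = (\<lambda>i. \<Sum>e\<in>emits G v. Sc G C e (Sc' G C e x) i)"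
proof (rule ext)
  fix \<beta>
  have fin: "finite (emits G v)" using assms by (auto simp: regular_def singular_def)
  show "Pc G C v x \<beta> = (\<Sum>e\<in>emits G v. Sc G C e (Sc' G C e x) \<beta>)"
  proof (cases "\<beta> \<in> C")
    case True
    then have bd: "\<beta> \<in> boundary G" using sub by auto
    show ?thesis
    proof (cases "pfirst \<beta>")
      case None
      then have "pstart G \<beta> \<noteq> v" using bd_nofirst[OF bd] assms by (auto simp: regular_def)
      then show ?thesis using None True by (simp add: id_SS' Pc_def)
    next
      case (Some e0)
      then have f: "e0 \<in> edges G" "src G e0 = pstart G \<beta>" using first_facts True by auto
      have "(\<Sum>e\<in>emits G v. Sc G C e (Sc' G C e x) \<beta>) = (\<Sum>e\<in>emits G v. if e0 = e then x \<beta> else 0)"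
        using Some True by (intro sum.cong) (auto simp: id_SS')
      also have "\<dots> = (if e0 \<in> emits G v then x \<beta> else 0)" using fin by simp
      also have "\<dots> = Pc G C v x \<beta>" using f True by (auto simp: emits_def Pc_def)
      finally show ?thesis by simp
    qed
  next
    case False
    then show ?thesis by (simp add: id_SS' Pc_def)
  qed
qed

lemma S'_delta: "\<alpha> \<in> C \<Longrightarrow> pfirst \<alpha> = Some e \<Longrightarrow> Sc' G C e (delta \<alpha>) = (delta (shift G \<alpha>) :: _ \<Rightarrow> 'k::{zero,one})"
proof (rule ext)
  fix \<gamma>
  assume a: "\<alpha> \<in> C" "pfirst \<alpha> = Some e"
  note ff = first_facts[OF a]
  show "Sc' G C e (delta \<alpha>) \<gamma> = (delta (shift G \<alpha>) :: _ \<Rightarrow> 'k) \<gamma>"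
  proof (cases "\<gamma> \<in> C \<and> pstart G \<gamma> = rng G e")
    case True
    have h1: "shift G (pcons e \<gamma>) = \<gamma>" using True shift_pcons_C by auto
    have h2: "pcons e (shift G \<alpha>) = \<alpha>" using ff by auto
    have "pcons e \<gamma> = \<alpha> \<longleftrightarrow> \<gamma> = shift G \<alpha>" using h1 h2 by auto
    then show ?thesis using True by (simp add: Sc'_def delta_def)
  next
    case False
    then show ?thesis using ff by (auto simp: Sc'_def delta_def)
  qed
qed

lemma S_delta: "\<beta> \<in> C \<Longrightarrow> pfirst \<beta> = Some e \<Longrightarrow> Sc G C e (delta (shift G \<beta>)) = (delta \<beta> :: _ \<Rightarrow> 'k::{zero,one})"
proof (rule ext)
  fix \<gamma>
  assume a: "\<beta> \<in> C" "pfirst \<beta> = Some e"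
  note ff = first_facts[OF a]
  show "Sc G C e (delta (shift G \<beta>)) \<gamma> = (delta \<beta> :: _ \<Rightarrow> 'k) \<gamma>"
  proof (cases "\<gamma> \<in> C \<and> pfirst \<gamma> = Some e")
    case True
    have h1: "pcons e (shift G \<gamma>) = \<gamma>" using True pcons_shift by auto
    have h2: "pcons e (shift G \<beta>) = \<beta>" using ff by auto
    have "shift G \<gamma> = shift G \<beta> \<longleftrightarrow> \<gamma> = \<beta>" using h1 h2 by metis
    then show ?thesis using True by (simp add: Sc_def delta_def)
  next
    case False
    then show ?thesis using a by (auto simp: Sc_def delta_def)
  qed
qed

lemma transport:
  fixes W :: "(('v, 'e) path \<Rightarrow> 'k::{zero,one}) set"
  assumes W: "\<forall>e\<in>edges G. \<forall>x\<in>W. Sc G C e x \<in> W \<and> Sc' G C e x \<in> W"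
    and a: "\<alpha> \<in> C" "delta \<alpha> \<in> W" and b: "\<beta> \<in> C"
  shows "delta \<beta> \<in> W"
proof -
  have down: "delta ((shift G ^^ n) \<alpha>) \<in> W" for n
  proof (induction n)
    case 0 then show ?case using a by simp
  next
    case (Suc n)
    define a' where "a' = (shift G ^^ n) \<alpha>"
    have a'C: "a' \<in> C" unfolding a'_def using funpow_shift_in a by auto
    show ?case
    proof (cases "pfirst a'")
      case None
      then have "shift G a' = a'" using bd_nofirst[of a' G] a'C sub
        by (metis shift.simps(1) subsetD)
      then show ?thesis using Suc a'_def by simp
    next
      case (Some e)
      then have "e \<in> edges G" using first_facts a'C by auto
      then have "Sc' G C e (delta a') \<in> W" using W Suc a'_def by auto
      then show ?thesis using S'_delta[OF a'C Some, where 'k='k] a'_def by simp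
    qed
  qed
  have up: "\<And>\<beta>. \<beta> \<in> C \<Longrightarrow> delta ((shift G ^^ n) \<beta>) \<in> W \<Longrightarrow> delta \<beta> \<in> W" for n
  proof (induction n)
    case 0 then show ?case by simp
  next
    case (Suc n \<beta>)
    have sC: "shift G \<beta> \<in> C" using Suc shift_in by auto
    have "delta (shift G \<beta>) \<in> W" using Suc.IH[OF sC] Suc.prems by (simp add: funpow_swap1)
    show ?case
    proof (cases "pfirst \<beta>")
      case None
      then have "shift G \<beta> = \<beta>" using bd_nofirst[of \<beta> G] Suc.prems sub
        by (metis shift.simps(1) subsetD)
      then show ?thesis using \<open>delta (shift G \<beta>) \<in> W\<close> by simp
    next
      case (Some e)
      then have "e \<in> edges G" using first_facts Suc.prems by auto
      then have "Sc G C e (delta (shift G \<beta>)) \<in> W" using W \<open>delta (shift G \<beta>) \<in> W\<close> by auto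
      then show ?thesis using S_delta[OF Suc.prems(1) Some, where 'k='k] by simp
    qed
  qed
  obtain m n where "(shift G ^^ m) \<alpha> = (shift G ^^ n) \<beta>" using equiv_mem[OF a(1) b]
    unfolding shift_tail_equiv_def by blast
  then show ?thesis using down[of m] up[OF b] by metis
qed

end

lemma distinguish:
  fixes U :: "(('v, 'e) path \<Rightarrow> 'k::field) \<Rightarrow> (('v, 'e) path \<Rightarrow> 'k)"
  assumes c1: "stc G C1" and c2: "stc G C2" and a: "\<alpha> \<in> C1" "delta \<alpha> \<in> V1" "(\<lambda>_. 0) \<in> V1"
    and W: "\<forall>x\<in>V1. supp_on C1 x"
    "\<forall>v\<in>verts G. \<forall>x\<in>V1. Pc G C1 v x \<in> V1"
    "\<forall>e\<in>edges G. \<forall>x\<in>V1. Sc G C1 e x \<in> V1 \<and> Sc' G C1 e x \<in> V1"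
    "\<forall>x\<in>V1. \<forall>y\<in>V1. (\<lambda>i. x i - y i) \<in> V1"
    and V2: "\<forall>x\<in>V1. supp_on C2 (U x)"
    and Ulin: "\<forall>x\<in>V1. \<forall>y\<in>V1. U (\<lambda>i. x i - y i) = (\<lambda>i. U x i - U y i)"
    and Ui: "\<forall>v\<in>verts G. \<forall>x\<in>V1. U (Pc G C1 v x) = Pc G C2 v (U x)"
    "\<forall>e\<in>edges G. \<forall>x\<in>V1. U (Sc G C1 e x) = Sc G C2 e (U x) \<and> U (Sc' G C1 e x) = Sc' G C2 e (U x)"
    and inj: "inj_on U V1"
  shows "\<alpha> \<in> C2"
proof -
  have wf: "wf_graph G" using c1 by (simp add: stc_def)
  have h: "U (\<lambda>i. x i - y i) = (\<lambda>i. U x i - U y i)" if "x \<in> V1" "y \<in> V1" for x y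
    using Ulin that by blast
  have U0: "U (\<lambda>_. 0) = (\<lambda>_. 0)" using h[OF a(3) a(3)] by simp
  define y where "y = U (delta \<alpha>)"
  have "y \<noteq> (\<lambda>_. 0)"
  proof
    assume "y = (\<lambda>_. 0)"
    then have "U (delta \<alpha>) = U (\<lambda>_. 0)" using U0 y_def by simp
    then have "delta \<alpha> = (\<lambda>_. (0::'k))" using inj_onD[OF inj _ a(2) a(3)] by blast
    then have "delta \<alpha> \<alpha> = (0::'k)" by simp
    then show False by (simp add: delta_def)
  qed
  then obtain \<beta> where yb: "y \<beta> \<noteq> 0" by auto
  then have bC: "\<beta> \<in> C2" using V2 a unfolding y_def supp_on_def by auto
  show ?thesis
  proof (rule ccontr)
    assume "\<alpha> \<notin> C2"
    then have ne: "\<beta> \<noteq> \<alpha>" using bC by auto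
    have "\<alpha> \<in> boundary G" "\<beta> \<in> boundary G" using a bC stc.sub c1 c2 by auto
    then obtain m :: "('v, 'e) path \<Rightarrow> 'k" where m: "realizable G m" "m \<alpha> = 1" "m \<beta> = 0"
      using separate[OF wf, of \<alpha> "{\<beta>}"] ne by auto
    have md: "mult m (delta \<alpha>) = delta \<alpha>" using m(2) by (auto simp: mult_def delta_def fun_eq_iff)
    have "U (mult m (delta \<alpha>)) = mult m y"
      using real_intertwine[OF c1 c2 m(1) W V2 Ulin Ui] a unfolding y_def by auto
    then have "y = mult m y" using md y_def by simp
    then have "y \<beta> = m \<beta> * y \<beta>" by (metis mult_def)
    then show False using m(3) yb by simp
  qed
qed

lemma ksub_add: "ksubspace W \<Longrightarrow> x \<in> W \<Longrightarrow> y \<in> W \<Longrightarrow> (\<lambda>i. x i + y i) \<in> W"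
  by (simp add: ksubspace_def)

lemma ksub_smult: "ksubspace W \<Longrightarrow> x \<in> W \<Longrightarrow> (\<lambda>i. c * x i) \<in> W"
  by (simp add: ksubspace_def)

lemma ksub_diff: "ksubspace W \<Longrightarrow> x \<in> W \<Longrightarrow> y \<in> W \<Longrightarrow> (\<lambda>i. x i - y i) \<in> W"
proof -
  assume a: "ksubspace W" "x \<in> W" "y \<in> W"
  have "(\<lambda>i. (-1) * y i) \<in> W" by (rule ksub_smult[OF a(1,3)])
  from ksub_add[OF a(1,2) this] show ?thesis by simp
qed

lemma sum_deltas:
  assumes "ksubspace W" "finite S" "\<forall>\<beta>\<in>S. delta \<beta> \<in> W"
  shows "(\<lambda>i. \<Sum>\<beta>\<in>S. c \<beta> * delta \<beta> i) \<in> W"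
  using assms(2,3)
proof (induction S rule: finite_induct)
  case empty then show ?case using assms(1) by (simp add: ksubspace_def)
next
  case (insert b S)
  have "(\<lambda>i. c b * delta b i) \<in> W" using insert assms(1) by (simp add: ksubspace_def)
  moreover have "(\<lambda>i. \<Sum>\<beta>\<in>S. c \<beta> * delta \<beta> i) \<in> W" using insert by simp
  ultimately have "(\<lambda>i. c b * delta b i + (\<Sum>\<beta>\<in>S. c \<beta> * delta \<beta> i)) \<in> W"
    using ksub_add[OF assms(1)] by fastforce
  then show ?case using insert by simp
qed

lemma fin_expand:
  assumes "finite S" "\<forall>\<beta>. x \<beta> \<noteq> 0 \<longrightarrow> \<beta> \<in> S"
  shows "x = (\<lambda>i. \<Sum>\<beta>\<in>S. x \<beta> * (delta \<beta> i :: 'k::field))"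
proof (rule ext)
  fix i
  have "(\<Sum>\<beta>\<in>S. x \<beta> * (delta \<beta> i :: 'k)) = (\<Sum>\<beta>\<in>S. if i = \<beta> then x i else 0)"
    by (intro sum.cong) (auto simp: delta_def)
  also have "\<dots> = x i" using assms by auto
  finally show "x i = (\<Sum>\<beta>\<in>S. x \<beta> * (delta \<beta> i :: 'k))" by simp
qed


lemma klin_add: "klinear_on V U \<Longrightarrow> x \<in> V \<Longrightarrow> y \<in> V \<Longrightarrow> U (\<lambda>i. x i + y i) = (\<lambda>i. U x i + U y i)"
  by (simp add: klinear_on_def)

lemma klin_smult: "klinear_on V U \<Longrightarrow> x \<in> V \<Longrightarrow> U (\<lambda>i. c * x i) = (\<lambda>i. c * U x i)"
  by (simp add: klinear_on_def)

lemma klin_diff: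
  assumes "ksubspace V" "klinear_on V U" "x \<in> V" "y \<in> V"
  shows "U (\<lambda>i. x i - y i) = (\<lambda>i. U x i - U y i)"
proof -
  have my: "(\<lambda>i. (-1) * y i) \<in> V" by (rule ksub_smult[OF assms(1,4)])
  have "U (\<lambda>i. x i + (\<lambda>i. (-1) * y i) i) = (\<lambda>i. U x i + U (\<lambda>i. (-1) * y i) i)"
    by (rule klin_add[OF assms(2,3) my])
  also have "U (\<lambda>i. (-1) * y i) = (\<lambda>i. (-1) * U y i)"
    by (rule klin_smult[OF assms(2,4)])
  finally show ?thesis by simp
qed

lemma klin_P: "klinear_on V (Pc G C v)"
  by (auto simp: klinear_on_def Pc_def fun_eq_iff)
lemma klin_S: "klinear_on V (Sc G C e)"
  by (auto simp: klinear_on_def Sc_def fun_eq_iff)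
lemma klin_S': "klinear_on V (Sc' G C e)"
  by (auto simp: klinear_on_def Sc'_def fun_eq_iff)

definition LV :: "('v, 'e) path set \<Rightarrow> (('v, 'e) path \<Rightarrow> 'k::field) set" where
  "LV C = {x. finite {\<beta>. x \<beta> \<noteq> 0} \<and> supp_on C x}"

definition LR :: "('v, 'e) graph \<Rightarrow> ('v, 'e) path set \<Rightarrow> (('v, 'e) path, 'k::field, 'v, 'e) lrep" where
  "LR G C = (LV C, Pc G C, Sc G C, Sc' G C)"

lemma ksub_LV: "ksubspace (LV C :: (_ \<Rightarrow> 'k::field) set)"
  unfolding ksubspace_def
proof (intro conjI ballI allI)
  show "(\<lambda>_. 0) \<in> (LV C :: (_ \<Rightarrow> 'k::field) set)" by (simp add: LV_def supp_on_def)
next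
  fix x y :: "_ \<Rightarrow> 'k" assume x: "x \<in> LV C" and y: "y \<in> LV C"
  have "{\<beta>. x \<beta> + y \<beta> \<noteq> 0} \<subseteq> {\<beta>. x \<beta> \<noteq> 0} \<union> {\<beta>. y \<beta> \<noteq> 0}" by auto
  moreover have "finite ({\<beta>. x \<beta> \<noteq> 0} \<union> {\<beta>. y \<beta> \<noteq> 0})" using x y by (simp add: LV_def)
  ultimately have "finite {\<beta>. x \<beta> + y \<beta> \<noteq> 0}" by (rule finite_subset)
  moreover have "supp_on C (\<lambda>i. x i + y i)" using x y unfolding LV_def supp_on_def
    by (metis (mono_tags, lifting) add.right_neutral add_0 mem_Collect_eq)
  ultimately show "(\<lambda>i. x i + y i) \<in> LV C" by (simp add: LV_def)
next
  fix c and x :: "_ \<Rightarrow> 'k" assume x: "x \<in> LV C"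
  have "{\<beta>. c * x \<beta> \<noteq> 0} \<subseteq> {\<beta>. x \<beta> \<noteq> 0}" by auto
  then have "finite {\<beta>. c * x \<beta> \<noteq> 0}" using x by (simp add: LV_def finite_subset)
  moreover have "supp_on C (\<lambda>i. c * x i)" using x unfolding LV_def supp_on_def by auto
  ultimately show "(\<lambda>i. c * x i) \<in> LV C" by (simp add: LV_def)
qed

lemma LV_P: "x \<in> LV C \<Longrightarrow> Pc G C v x \<in> LV C"
  unfolding LV_def supp_on_def Pc_def
  by (auto elim!: rev_finite_subset)

context stc
begin

lemma LV_S: "x \<in> LV C \<Longrightarrow> Sc G C e x \<in> LV C"
proof -
  assume x: "x \<in> LV C"
  have "{\<beta>. Sc G C e x \<beta> \<noteq> 0} \<subseteq> pcons e ` {\<beta>. x \<beta> \<noteq> 0}"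
  proof
    fix \<beta> assume "\<beta> \<in> {\<beta>. Sc G C e x \<beta> \<noteq> 0}"
    then have h: "\<beta> \<in> C" "pfirst \<beta> = Some e" "x (shift G \<beta>) \<noteq> 0" by (auto simp: Sc_def split: if_splits)
    then have "\<beta> = pcons e (shift G \<beta>)" using pcons_shift by metis
    then show "\<beta> \<in> pcons e ` {\<beta>. x \<beta> \<noteq> 0}" using h by blast
  qed
  then have "finite {\<beta>. Sc G C e x \<beta> \<noteq> 0}" using x unfolding LV_def by (auto elim: finite_subset)
  then show ?thesis unfolding LV_def supp_on_def by (auto simp: Sc_def)
qed

lemma LV_S': "x \<in> LV C \<Longrightarrow> Sc' G C e x \<in> LV C"
proof -
  assume x: "x \<in> LV C"
  have "{\<beta>. Sc' G C e x \<beta> \<noteq> 0} \<subseteq> shift G ` {\<beta>. x \<beta> \<noteq> 0}"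
  proof
    fix \<beta> assume "\<beta> \<in> {\<beta>. Sc' G C e x \<beta> \<noteq> 0}"
    then have h: "\<beta> \<in> C" "pstart G \<beta> = rng G e" "x (pcons e \<beta>) \<noteq> 0" by (auto simp: Sc'_def split: if_splits)
    then have "\<beta> = shift G (pcons e \<beta>)" using shift_pcons_C by metis
    then show "\<beta> \<in> shift G ` {\<beta>. x \<beta> \<noteq> 0}" using h by blast
  qed
  then have "finite {\<beta>. Sc' G C e x \<beta> \<noteq> 0}" using x unfolding LV_def by (auto elim: finite_subset)
  then show ?thesis unfolding LV_def supp_on_def by (auto simp: Sc'_def)
qed

lemma delta_LV: "\<alpha> \<in> C \<Longrightarrow> (delta \<alpha> :: _ \<Rightarrow> 'k::field) \<in> LV C"
proof -
  assume "\<alpha> \<in> C"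
  have "{\<beta>. (delta \<alpha> :: _ \<Rightarrow> 'k) \<beta> \<noteq> 0} = {\<alpha>}" by (auto simp: delta_def)
  then show "delta \<alpha> \<in> (LV C :: (_ \<Rightarrow> 'k::field) set)" using \<open>\<alpha> \<in> C\<close> unfolding LV_def supp_on_def by (auto simp: delta_def)
qed

lemma LR_rep: "leavitt_rep G (LR G C :: (('v, 'e) path, 'k::field, 'v, 'e) lrep)"
  unfolding leavitt_rep_def LR_def prod.case
proof (intro conjI ballI allI impI)
  show "ksubspace (LV C :: (_ \<Rightarrow> 'k) set)" by (rule ksub_LV)
  show "kop (LV C :: (_ \<Rightarrow> 'k) set) (Pc G C v)" for v
    using LV_P klin_P by (auto simp: kop_def)
  show "kop (LV C :: (_ \<Rightarrow> 'k) set) (Sc G C e)" for e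
    using LV_S klin_S by (auto simp: kop_def)
  show "kop (LV C :: (_ \<Rightarrow> 'k) set) (Sc' G C e)" for e
    using LV_S' klin_S' by (auto simp: kop_def)
  show "Pc G C v (Pc G C w x) = (if v = w then Pc G C v x else (\<lambda>_. 0 :: 'k))" for v w x
    by (rule id_PP)
  show "Pc G C (src G e) (Sc G C e x) = Sc G C e (x :: _ \<Rightarrow> 'k)" for e x by (rule id_PS)
  show "Sc G C e (Pc G C (rng G e) x) = Sc G C e (x :: _ \<Rightarrow> 'k)" for e x by (rule id_SP)
  show "Pc G C (rng G e) (Sc' G C e x) = Sc' G C e (x :: _ \<Rightarrow> 'k)" for e x by (rule id_PS')
  show "Sc' G C e (Pc G C (src G e) x) = Sc' G C e (x :: _ \<Rightarrow> 'k)" if "e \<in> edges G" for e x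
    by (rule id_S'P[OF that])
  show "Sc' G C e (Sc G C f x) = (if e = f then Pc G C (rng G e) x else (\<lambda>_. 0 :: 'k))" if "e \<in> edges G" for e f x
    by (rule id_S'S[OF that])
  show "Pc G C v x = (\<lambda>i. \<Sum>e\<in>emits G v. Sc G C e (Sc' G C e x) i :: 'k)" if "regular G v" for v x
    by (rule id_reg[OF that])
qed

lemma LR_irred: "leavitt_irred G (LR G C :: (('v, 'e) path, 'k::field, 'v, 'e) lrep)"
proof -
  obtain \<alpha> where a: "\<alpha> \<in> C" using ne by auto
  have nz: "\<exists>v\<in>verts G. \<exists>x\<in>(LV C :: (_ \<Rightarrow> 'k) set). Pc G C v x \<noteq> (\<lambda>_. 0)"
  proof (intro bexI)
    show "pstart G \<alpha> \<in> verts G" using bd_start[OF wf] a sub by auto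
    show "delta \<alpha> \<in> (LV C :: (_ \<Rightarrow> 'k) set)" by (rule delta_LV[OF a])
    have "Pc G C (pstart G \<alpha>) (delta \<alpha>) \<alpha> = (1::'k)" using a by (simp add: Pc_def delta_def)
    then show "Pc G C (pstart G \<alpha>) (delta \<alpha>) \<noteq> (\<lambda>_. 0 :: 'k)" by (metis zero_neq_one)
  qed
  have inv: "W = {\<lambda>_. 0} \<or> W = LV C" if W: "leavitt_invariant G (LR G C) W" for W :: "(_ \<Rightarrow> 'k) set"
  proof (cases "W = {\<lambda>_. 0}")
    case True then show ?thesis by simp
  next
    case False
    have Wk: "ksubspace W" "W \<subseteq> LV C" "\<forall>v\<in>verts G. Pc G C v ` W \<subseteq> W"
      "\<forall>e\<in>edges G. Sc G C e ` W \<subseteq> W \<and> Sc' G C e ` W \<subseteq> W"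
      using W unfolding leavitt_invariant_def LR_def by auto
    have "(\<lambda>_. 0) \<in> W" using Wk(1) by (simp add: ksubspace_def)
    then obtain x where x: "x \<in> W" "x \<noteq> (\<lambda>_. 0)" using False by blast
    then obtain b where xb: "x b \<noteq> 0" by auto
    have xL: "x \<in> LV C" using x Wk by auto
    define T where "T = {\<beta>. x \<beta> \<noteq> 0}"
    have T: "finite T" "T \<subseteq> C" using xL unfolding T_def LV_def supp_on_def by auto
    have bC: "b \<in> C" using T xb T_def by auto
    have bb: "b \<in> boundary G" and Tb: "T \<subseteq> boundary G" using bC T sub by auto
    obtain m :: "_ \<Rightarrow> 'k" where m: "realizable G m" "m b = 1" "\<forall>\<beta>\<in>T. \<beta> \<noteq> b \<longrightarrow> m \<beta> = 0"
      using separate[OF wf bb T(1) Tb] by blast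
    have Wc: "\<forall>x\<in>W. supp_on C x" "\<forall>v\<in>verts G. \<forall>x\<in>W. Pc G C v x \<in> W"
      "\<forall>e\<in>edges G. \<forall>x\<in>W. Sc G C e x \<in> W \<and> Sc' G C e x \<in> W"
      "\<forall>x\<in>W. \<forall>y\<in>W. (\<lambda>i. x i - y i) \<in> W"
      using Wk ksub_diff[OF Wk(1)] unfolding LV_def by (auto simp: image_subset_iff)
    have mW: "mult m x \<in> W" using real_closed[OF m(1) Wc] x by auto
    have "mult m x = (\<lambda>i. x b * delta b i)"
    proof (rule ext)
      fix i show "mult m x i = x b * delta b i"
        using m(2) m(3)[rule_format, of i] unfolding T_def mult_def delta_def by (cases "i = b") auto
    qed
    then have "(\<lambda>i. x b * delta b i) \<in> W" using mW by simp
    then have "(\<lambda>i. inverse (x b) * (\<lambda>i. x b * delta b i) i) \<in> W"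
      by (rule ksub_smult[OF Wk(1)])
    moreover have "(\<lambda>i. inverse (x b) * (\<lambda>i. x b * delta b i) i) = delta b"
      using xb by (simp add: fun_eq_iff mult.assoc[symmetric])
    ultimately have db: "delta b \<in> W" by simp
    have alld: "delta \<beta> \<in> W" if "\<beta> \<in> C" for \<beta>
      using transport[OF Wc(3) bC db that] .
    have "LV C \<subseteq> W"
    proof
      fix y :: "_ \<Rightarrow> 'k" assume y: "y \<in> LV C"
      define S where "S = {\<beta>. y \<beta> \<noteq> 0}"
      have S: "finite S" "S \<subseteq> C" using y unfolding S_def LV_def supp_on_def by auto
      have "y = (\<lambda>i. \<Sum>\<beta>\<in>S. y \<beta> * delta \<beta> i)" using fin_expand[OF S(1)] S_def by auto
      moreover have "(\<lambda>i. \<Sum>\<beta>\<in>S. y \<beta> * delta \<beta> i) \<in> W"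
        using sum_deltas[OF Wk(1) S(1)] alld S(2) by auto
      ultimately show "y \<in> W" by simp
    qed
    then show ?thesis using Wk(2) by auto
  qed
  show ?thesis unfolding leavitt_irred_def using LR_rep nz inv by (simp add: LR_def)
qed

end

lemma LR_equiv_eq:
  assumes c1: "stc G C1" and c2: "stc G C2"
    and eq: "alg_equiv G (LR G C1 :: (('v, 'e) path, 'k::field, 'v, 'e) lrep) (LR G C2)"
  shows "C1 = C2"
proof -
  obtain U :: "(_ \<Rightarrow> 'k) \<Rightarrow> (_ \<Rightarrow> 'k)" where U: "klinear_on (LV C1) U" "bij_betw U (LV C1) (LV C2)"
    "\<forall>v\<in>verts G. \<forall>x\<in>LV C1. U (Pc G C1 v x) = Pc G C2 v (U x)"
    "\<forall>e\<in>edges G. \<forall>x\<in>LV C1. U (Sc G C1 e x) = Sc G C2 e (U x) \<and> U (Sc' G C1 e x) = Sc' G C2 e (U x)"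
    using eq unfolding alg_equiv_def LR_def prod.case by blast
  obtain \<alpha> where a: "\<alpha> \<in> C1" using stc.ne[OF c1] by blast
  have d: "(delta \<alpha> :: _ \<Rightarrow> 'k) \<in> LV C1" by (rule stc.delta_LV[OF c1 a])
  have z: "(\<lambda>_. 0) \<in> (LV C1 :: (_ \<Rightarrow> 'k) set)" using ksub_LV[where 'k='k] unfolding ksubspace_def by blast
  have h1: "\<forall>x\<in>LV C1. supp_on C1 (x :: _ \<Rightarrow> 'k)" by (simp add: LV_def)
  have h2: "\<forall>v\<in>verts G. \<forall>x\<in>LV C1. Pc G C1 v (x :: _ \<Rightarrow> 'k) \<in> LV C1" by (simp add: LV_P)
  have h3: "\<forall>e\<in>edges G. \<forall>x\<in>LV C1. Sc G C1 e (x :: _ \<Rightarrow> 'k) \<in> LV C1 \<and> Sc' G C1 e x \<in> LV C1"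
    using stc.LV_S[OF c1] stc.LV_S'[OF c1] by blast
  have h4: "\<forall>x\<in>LV C1. \<forall>y\<in>LV C1. (\<lambda>i. x i - y i :: 'k) \<in> LV C1"
    using ksub_diff[OF ksub_LV[where 'k='k]] by blast
  have h5: "\<forall>x\<in>LV C1. supp_on C2 (U x)"
  proof
    fix x :: "_ \<Rightarrow> 'k" assume "x \<in> LV C1"
    then have "U x \<in> LV C2" using U(2) bij_betwE by blast
    then show "supp_on C2 (U x)" by (simp add: LV_def)
  qed
  have h6: "\<forall>x\<in>LV C1. \<forall>y\<in>LV C1. U (\<lambda>i. x i - y i) = (\<lambda>i. U x i - U y i)"
    using klin_diff[OF ksub_LV[where 'k='k] U(1)] by blast
  have h7: "inj_on U (LV C1)" using U(2) by (simp add: bij_betw_def)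
  have "\<alpha> \<in> C2" by (rule distinguish[OF c1 c2 a d z h1 h2 h3 h4 h5 h6 U(3) U(4) h7])
  then show ?thesis using stc_eq[OF c1 c2 a] by simp
qed


definition sq :: "('a \<Rightarrow> complex) \<Rightarrow> 'a \<Rightarrow> real" where
  "sq f = (\<lambda>x. (cmod (f x))\<^sup>2)"

lemma sq_nonneg[simp]: "0 \<le> sq f x"
  by (simp add: sq_def)

lemma l2_iff: "f \<in> l2space \<longleftrightarrow> sq f summable_on UNIV"
  by (simp add: l2space_def sq_def)

lemma l2norm_sq: "l2norm f = sqrt (infsum (sq f) UNIV)"
  by (simp add: l2norm_def sq_def)

lemma infsum_le_dom:
  fixes f g :: "'a \<Rightarrow> real"
  assumes "\<And>x. 0 \<le> f x" "\<And>x. f x \<le> g x" "g summable_on UNIV"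
  shows "f summable_on UNIV" "infsum f UNIV \<le> infsum g UNIV"
proof -
  show s: "f summable_on UNIV" using summable_on_comparison_test[OF assms(3)] assms(1,2) by blast
  show "infsum f UNIV \<le> infsum g UNIV" using infsum_mono[OF s assms(3)] assms(2) by blast
qed

lemma l2_dom: "g \<in> l2space \<Longrightarrow> (\<And>x. cmod (f x) \<le> cmod (g x)) \<Longrightarrow> f \<in> l2space \<and> infsum (sq f) UNIV \<le> infsum (sq g) UNIV"
proof -
  assume g: "g \<in> l2space" and le: "\<And>x. cmod (f x) \<le> cmod (g x)"
  have "sq f x \<le> sq g x" for x unfolding sq_def using le[of x] by (simp add: power_mono)
  then show ?thesis using infsum_le_dom[of "sq f" "sq g"] g by (simp add: l2_iff)
qed

lemma l2_zero: "(\<lambda>_. 0) \<in> l2space"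
  by (simp add: l2_iff sq_def)

lemma l2_finite: "finite {x. f x \<noteq> 0} \<Longrightarrow> f \<in> l2space"
proof -
  assume fin: "finite {x. f x \<noteq> 0}"
  have "sq f summable_on {x. f x \<noteq> 0}" using fin by simp
  then show ?thesis unfolding l2_iff
    by (subst summable_on_cong_neutral[where T = "{x. f x \<noteq> 0}" and g = "sq f"]) (auto simp: sq_def)
qed

lemma l2_smult: "f \<in> l2space \<Longrightarrow> (\<lambda>i. c * f i) \<in> l2space"
proof -
  assume "f \<in> l2space"
  then have "(\<lambda>x. (cmod c)\<^sup>2 * sq f x) summable_on UNIV" by (simp add: l2_iff summable_on_cmult_right)
  moreover have "sq (\<lambda>i. c * f i) = (\<lambda>x. (cmod c)\<^sup>2 * sq f x)"
    by (simp add: sq_def fun_eq_iff norm_mult power_mult_distrib)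
  ultimately show ?thesis by (simp add: l2_iff)
qed

lemma l2_add: "f \<in> l2space \<Longrightarrow> g \<in> l2space \<Longrightarrow> (\<lambda>i. f i + g i) \<in> l2space"
proof -
  assume f: "f \<in> l2space" and g: "g \<in> l2space"
  have s: "(\<lambda>x. 2 * sq f x + 2 * sq g x) summable_on UNIV"
    using f g by (intro summable_on_add summable_on_cmult_right) (simp_all add: l2_iff)
  have "sq (\<lambda>i. f i + g i) x \<le> 2 * sq f x + 2 * sq g x" for x
  proof -
    have "cmod (f x + g x) \<le> cmod (f x) + cmod (g x)" by (rule norm_triangle_ineq)
    then have "(cmod (f x + g x))\<^sup>2 \<le> (cmod (f x) + cmod (g x))\<^sup>2" by (simp add: power_mono)
    also have "\<dots> \<le> 2 * (cmod (f x))\<^sup>2 + 2 * (cmod (g x))\<^sup>2"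
    proof -
      have "0 \<le> (cmod (f x) - cmod (g x))\<^sup>2" by simp
      then show ?thesis by (simp add: power2_diff power2_sum)
    qed
    finally show ?thesis by (simp add: sq_def)
  qed
  then show ?thesis unfolding l2_iff using infsum_le_dom(1)[OF _ _ s] by simp
qed

lemma l2_diff: "f \<in> l2space \<Longrightarrow> g \<in> l2space \<Longrightarrow> (\<lambda>i. f i - g i) \<in> l2space"
  using l2_add[OF _ l2_smult[of g "-1"], of f] by simp

lemma sq_le_infsum: "f \<in> l2space \<Longrightarrow> sq f x \<le> infsum (sq f) UNIV"
proof -
  assume "f \<in> l2space"
  then have "sum (sq f) {x} \<le> infsum (sq f) UNIV"
    by (intro finite_sum_le_infsum) (auto simp: l2_iff)
  then show ?thesis by simp
qed

lemma norm_le_l2norm: "f \<in> l2space \<Longrightarrow> cmod (f x) \<le> l2norm f"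
proof -
  assume "f \<in> l2space"
  then have "sq f x \<le> infsum (sq f) UNIV" by (rule sq_le_infsum)
  then have "sqrt (sq f x) \<le> l2norm f" by (simp add: l2norm_sq)
  then show ?thesis by (simp add: sq_def)
qed

lemma tail:
  assumes "f \<in> l2space" "e > 0"
  shows "\<exists>F. finite F \<and> infsum (\<lambda>x. if x \<in> F then 0 else sq f x) UNIV \<le> e"
proof -
  have s: "sq f summable_on UNIV" using assms by (simp add: l2_iff)
  obtain F where F: "finite F" "dist (sum (sq f) F) (infsum (sq f) UNIV) \<le> e"
    using infsum_finite_approximation[OF s assms(2)] by blast
  have s2: "sq f summable_on (-F)" using summable_on_subset[OF s] by blast
  have "infsum (sq f) UNIV = infsum (sq f) (F \<union> -F)" by simp
  also have "\<dots> = infsum (sq f) F + infsum (sq f) (-F)"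
    by (rule infsum_Un_disjoint) (use F s2 in auto)
  finally have eq: "infsum (sq f) UNIV = sum (sq f) F + infsum (sq f) (-F)" using F by simp
  have "infsum (\<lambda>x. if x \<in> F then 0 else sq f x) UNIV = infsum (sq f) (-F)"
    by (rule infsum_cong_neutral) auto
  also have "\<dots> \<le> e" using eq F(2) by (simp add: dist_real_def)
  finally show ?thesis using F(1) by blast
qed

lemma approx_closed:
  assumes H: "hilbert_subspace K" and g: "g \<in> l2space"
    and ap: "\<And>n. \<exists>X\<in>K. infsum (sq (\<lambda>i. X i - g i)) UNIV \<le> inverse (real (Suc n))"
  shows "g \<in> K"
proof -
  have "\<forall>n. \<exists>X. X \<in> K \<and> infsum (sq (\<lambda>i. X i - g i)) UNIV \<le> inverse (real (Suc n))"
    using ap by blast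
  from choice[OF this] obtain X where X0: "\<forall>n. X n \<in> K \<and> infsum (sq (\<lambda>i. X n i - g i)) UNIV \<le> inverse (real (Suc n))"
    by blast
  have X: "\<And>n. X n \<in> K" "\<And>n. infsum (sq (\<lambda>i. X n i - g i)) UNIV \<le> inverse (real (Suc n))"
    using X0 by auto
  have b: "l2norm (\<lambda>i. X n i - g i) \<le> sqrt (inverse (real (Suc n)))" for n
    using X(2)[of n] by (simp add: l2norm_sq)
  have nn: "0 \<le> l2norm (\<lambda>i. X n i - g i)" for n by (simp add: l2norm_def infsum_nonneg)
  have lim: "(\<lambda>n. sqrt (inverse (real (Suc n)))) \<longlonglongrightarrow> 0"
    using tendsto_real_sqrt[OF LIMSEQ_inverse_real_of_nat] by simp
  have "(\<lambda>n. l2norm (\<lambda>i. X n i - g i)) \<longlonglongrightarrow> 0"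
    by (rule real_tendsto_sandwich[where f = "\<lambda>_. 0", OF _ _ tendsto_const lim]) (use b nn in auto)
  moreover have "\<forall>X g. (\<forall>n. X n \<in> K) \<longrightarrow> g \<in> l2space \<longrightarrow>
           (\<lambda>n. l2norm (\<lambda>x. X n x - g x)) \<longlonglongrightarrow> 0 \<longrightarrow> g \<in> K"
    using H unfolding hilbert_subspace_def by blast
  ultimately show ?thesis using X(1) g by blast
qed

lemma infsum_of_real_sum:
  fixes r :: "'a \<Rightarrow> real"
  assumes "r summable_on A"
  shows "infsum (\<lambda>x. complex_of_real (r x)) A = complex_of_real (infsum r A)"
  by (rule infsumI[OF has_sum_of_real[OF has_sum_infsum[OF assms]]])


lemma l2_reindex:
  assumes f: "f \<in> l2space" and inj: "inj_on h A" and g: "\<And>\<beta>. g \<beta> = (if \<beta> \<in> A then f (h \<beta>) else 0)"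
  shows "g \<in> l2space \<and> infsum (sq g) UNIV \<le> infsum (sq f) UNIV"
proof -
  have sf: "sq f summable_on UNIV" using f by (simp add: l2_iff)
  have sfA: "sq f summable_on (h ` A)" using summable_on_subset[OF sf] by blast
  have eqA: "sq g \<beta> = (sq f \<circ> h) \<beta>" if "\<beta> \<in> A" for \<beta> using that g by (simp add: sq_def)
  have "(sq f \<circ> h) summable_on A" using sfA summable_on_reindex[OF inj] by blast
  then have "sq g summable_on A" using summable_on_cong eqA by (metis (no_types, lifting))
  moreover have "sq g summable_on UNIV \<longleftrightarrow> sq g summable_on A"
    by (rule summable_on_cong_neutral) (auto simp: g sq_def)
  ultimately have sg: "sq g summable_on UNIV" by simp
  have "infsum (sq g) UNIV = infsum (sq g) A"
    by (rule infsum_cong_neutral) (auto simp: g sq_def)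
  also have "\<dots> = infsum (sq f \<circ> h) A" using eqA by (rule infsum_cong)
  also have "\<dots> = infsum (sq f) (h ` A)" by (rule infsum_reindex[OF inj, symmetric])
  also have "\<dots> \<le> infsum (sq f) UNIV" by (rule infsum_mono2[OF sfA sf]) auto
  finally show ?thesis using sg by (simp add: l2_iff)
qed

definition HV :: "('v, 'e) path set \<Rightarrow> (('v, 'e) path \<Rightarrow> complex) set" where
  "HV C = {x \<in> l2space. supp_on C x}"

definition HR :: "('v, 'e) graph \<Rightarrow> ('v, 'e) path set \<Rightarrow> (('v, 'e) path, 'v, 'e) crep" where
  "HR G C = (HV C, Pc G C, Sc G C, Sc' G C)"

lemma ksub_HV: "ksubspace (HV C)"
  unfolding ksubspace_def HV_def
proof (intro conjI ballI allI)
  show "(\<lambda>_. 0) \<in> {x \<in> l2space. supp_on C x}" by (simp add: l2_zero supp_on_def)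
next
  fix x y assume x: "x \<in> {x \<in> l2space. supp_on C x}" and y: "y \<in> {x \<in> l2space. supp_on C x}"
  have "supp_on C (\<lambda>i. x i + y i)" using x y unfolding supp_on_def
    by (metis (mono_tags, lifting) add.right_neutral add_0 mem_Collect_eq)
  then show "(\<lambda>i. x i + y i) \<in> {x \<in> l2space. supp_on C x}" using x y l2_add by auto
next
  fix c x assume x: "x \<in> {x \<in> l2space. supp_on C x}"
  then show "(\<lambda>i. c * x i) \<in> {x \<in> l2space. supp_on C x}" using l2_smult by (auto simp: supp_on_def)
qed

lemma hilbert_HV: "hilbert_subspace (HV C)"
  unfolding hilbert_subspace_def
proof (intro conjI allI impI)
  show "HV C \<subseteq> l2space" by (auto simp: HV_def)
  show "ksubspace (HV C)" by (rule ksub_HV)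
  fix X g assume X: "\<forall>n. X n \<in> HV C" and g: "g \<in> l2space"
    and lim: "(\<lambda>n. l2norm (\<lambda>x. X n x - g x)) \<longlonglongrightarrow> 0"
  have "g \<beta> = 0" if b: "\<beta> \<notin> C" for \<beta>
  proof -
    have "cmod (g \<beta>) \<le> l2norm (\<lambda>x. X n x - g x)" for n
    proof -
      have Xn: "X n \<in> l2space" "X n \<beta> = 0" using X b by (auto simp: HV_def supp_on_def)
      have "cmod ((\<lambda>x. X n x - g x) \<beta>) \<le> l2norm (\<lambda>x. X n x - g x)"
        by (rule norm_le_l2norm[OF l2_diff[OF Xn(1) g]])
      then show ?thesis using Xn(2) by simp
    qed
    then have "cmod (g \<beta>) \<le> 0" using lim by (intro tendsto_lowerbound[OF lim]) auto
    then show ?thesis by simp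
  qed
  then show "g \<in> HV C" using g by (auto simp: HV_def supp_on_def)
qed

lemma HV_P: "x \<in> HV C \<Longrightarrow> Pc G C v x \<in> HV C \<and> infsum (sq (Pc G C v x)) UNIV \<le> infsum (sq x) UNIV"
proof -
  assume x: "x \<in> HV C"
  have "cmod (Pc G C v x \<beta>) \<le> cmod (x \<beta>)" for \<beta> by (simp add: Pc_def)
  then show ?thesis using l2_dom[of x "Pc G C v x"] x by (auto simp: HV_def supp_on_def Pc_def)
qed

context stc
begin

lemma inj_shift: "inj_on (shift G) {\<beta> \<in> C. pfirst \<beta> = Some e}"
  by (rule inj_onI) (metis (mono_tags, lifting) mem_Collect_eq pcons_shift)

lemma inj_pcons: "inj_on (pcons e) {\<beta> \<in> C. pstart G \<beta> = rng G e}"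
  by (rule inj_onI) (metis (mono_tags, lifting) mem_Collect_eq shift_pcons_C)

lemma HV_S: "x \<in> HV C \<Longrightarrow> Sc G C e x \<in> HV C \<and> infsum (sq (Sc G C e x)) UNIV \<le> infsum (sq x) UNIV"
proof -
  assume x: "x \<in> HV C"
  have "Sc G C e x \<in> l2space \<and> infsum (sq (Sc G C e x)) UNIV \<le> infsum (sq x) UNIV"
    by (rule l2_reindex[OF _ inj_shift]) (use x in \<open>auto simp: HV_def Sc_def\<close>)
  then show ?thesis by (auto simp: HV_def supp_on_def Sc_def)
qed

lemma HV_S': "x \<in> HV C \<Longrightarrow> Sc' G C e x \<in> HV C \<and> infsum (sq (Sc' G C e x)) UNIV \<le> infsum (sq x) UNIV"
proof -
  assume x: "x \<in> HV C"
  have "Sc' G C e x \<in> l2space \<and> infsum (sq (Sc' G C e x)) UNIV \<le> infsum (sq x) UNIV"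
    by (rule l2_reindex[OF _ inj_pcons]) (use x in \<open>auto simp: HV_def Sc'_def\<close>)
  then show ?thesis by (auto simp: HV_def supp_on_def Sc'_def)
qed

lemma bounded_of:
  assumes "klinear_on (HV C) T" "\<And>x. x \<in> HV C \<Longrightarrow> T x \<in> HV C \<and> infsum (sq (T x)) UNIV \<le> infsum (sq x) UNIV"
  shows "bounded_op (HV C) T"
  unfolding bounded_op_def kop_def
proof (intro conjI exI[of _ 1] ballI)
  show "klinear_on (HV C) T" by fact
  show "T ` HV C \<subseteq> HV C" using assms(2) by auto
  fix f assume "f \<in> HV C"
  then show "l2norm (T f) \<le> 1 * l2norm f" using assms(2) by (simp add: l2norm_sq)
qed

lemma adj_S:
  assumes e: "e \<in> edges G"
  shows "is_adjoint (HV C) (Sc G C e) (Sc' G C e)"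
  unfolding is_adjoint_def
proof (intro ballI)
  fix f g :: "_ \<Rightarrow> complex"
  define A where "A = {\<beta> \<in> C. pfirst \<beta> = Some e}"
  define B where "B = {\<beta> \<in> C. pstart G \<beta> = rng G e}"
  have BA: "B = shift G ` A"
  proof
    show "shift G ` A \<subseteq> B" unfolding A_def B_def using first_facts by auto
    show "B \<subseteq> shift G ` A"
    proof
      fix \<gamma> assume "\<gamma> \<in> B"
      then have "pcons e \<gamma> \<in> A" "shift G (pcons e \<gamma>) = \<gamma>"
        unfolding A_def B_def using pcons_in e shift_pcons_C by auto
      then show "\<gamma> \<in> shift G ` A" by (metis image_eqI)
    qed
  qed
  have "l2inner (Sc G C e f) g = infsum (\<lambda>\<beta>. f (shift G \<beta>) * cnj (g \<beta>)) A"
    unfolding l2inner_def by (rule infsum_cong_neutral) (auto simp: A_def Sc_def)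
  also have "\<dots> = infsum ((\<lambda>\<gamma>. f \<gamma> * cnj (g (pcons e \<gamma>))) \<circ> shift G) A"
    by (rule infsum_cong) (auto simp: A_def pcons_shift)
  also have "\<dots> = infsum (\<lambda>\<gamma>. f \<gamma> * cnj (g (pcons e \<gamma>))) B"
    unfolding BA A_def by (rule infsum_reindex[OF inj_shift, symmetric])
  also have "\<dots> = l2inner f (Sc' G C e g)"
    unfolding l2inner_def by (rule infsum_cong_neutral) (auto simp: B_def Sc'_def)
  finally show "l2inner (Sc G C e f) g = l2inner f (Sc' G C e g)" .
qed

lemma adj_P: "is_adjoint (HV C) (Pc G C v) (Pc G C v)"
  unfolding is_adjoint_def l2inner_def by (auto simp: Pc_def intro!: infsum_cong)

lemma ople: "op_le (HV C) (\<lambda>x. Sc G C e (Sc' G C e x)) (Pc G C (src G e))"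
  unfolding op_le_def
proof (intro ballI conjI)
  fix f assume f: "f \<in> HV C"
  define r where "r \<beta> = (if \<beta> \<in> C \<and> pstart G \<beta> = src G e \<and> pfirst \<beta> \<noteq> Some e then sq f \<beta> else 0)" for \<beta>
  have rs: "r summable_on UNIV"
    using infsum_le_dom(1)[of r "sq f"] f by (auto simp: r_def HV_def l2_iff)
  have "(Pc G C (src G e) f \<beta> - Sc G C e (Sc' G C e f) \<beta>) * cnj (f \<beta>) = complex_of_real (r \<beta>)" for \<beta>
  proof (cases "\<beta> \<in> C \<and> pfirst \<beta> = Some e")
    case True
    then show ?thesis using first_facts by (auto simp: r_def id_SS' Pc_def)
  next
    case False
    then show ?thesis by (auto simp: r_def id_SS' Pc_def sq_def complex_norm_square[symmetric])
  qed
  then have eq: "l2inner (\<lambda>x. Pc G C (src G e) f x - Sc G C e (Sc' G C e f) x) f = complex_of_real (infsum r UNIV)"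
    unfolding l2inner_def using infsum_of_real_sum[OF rs] by simp
  show "Im (l2inner (\<lambda>x. Pc G C (src G e) f x - Sc G C e (Sc' G C e f) x) f) = 0" using eq by simp
  show "0 \<le> Re (l2inner (\<lambda>x. Pc G C (src G e) f x - Sc G C e (Sc' G C e f) x) f)"
    using eq by (simp add: r_def infsum_nonneg)
qed

lemma HR_rep: "cstar_rep G (HR G C)"
  unfolding cstar_rep_def HR_def prod.case
proof (intro conjI ballI allI impI)
  show "hilbert_subspace (HV C)" by (rule hilbert_HV)
  show "bounded_op (HV C) (Pc G C v)" for v by (rule bounded_of[OF klin_P HV_P])
  show "bounded_op (HV C) (Sc G C e)" for e by (rule bounded_of[OF klin_S HV_S])
  show "bounded_op (HV C) (Sc' G C e)" for e by (rule bounded_of[OF klin_S' HV_S'])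
  show "is_adjoint (HV C) (Sc G C e) (Sc' G C e)" if "e \<in> edges G" for e by (rule adj_S[OF that])
  show "is_adjoint (HV C) (Pc G C v) (Pc G C v)" for v by (rule adj_P)
  show "Pc G C v (Pc G C v f) = Pc G C v f" for v f by (simp add: id_PP)
  show "Pc G C v (Pc G C w f) = (\<lambda>_. 0)" if "v \<noteq> w" for v w f using that by (simp add: id_PP)
  show "Sc' G C e (Sc G C f x) = (\<lambda>_. 0)" if "e \<in> edges G" "e \<noteq> f" for e f x
    using that by (simp add: id_S'S)
  show "Sc' G C e (Sc G C e x) = Pc G C (rng G e) x" if "e \<in> edges G" for e x
    using that by (simp add: id_S'S)
  show "op_le (HV C) (\<lambda>x. Sc G C e (Sc' G C e x)) (Pc G C (src G e))" for e by (rule ople)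
  show "Pc G C v x = (\<lambda>i. \<Sum>e\<in>emits G v. Sc G C e (Sc' G C e x) i)" if "regular G v" for v x
    by (rule id_reg[OF that])
qed

end


lemma sum_delta_eval:
  assumes "finite S"
  shows "(\<Sum>\<gamma>\<in>S. c \<gamma> * (delta \<gamma> \<beta> :: 'k::field)) = (if \<beta> \<in> S then c \<beta> else 0)"
proof -
  have "(\<Sum>\<gamma>\<in>S. c \<gamma> * (delta \<gamma> \<beta> :: 'k)) = (\<Sum>\<gamma>\<in>S. if \<beta> = \<gamma> then c \<gamma> else 0)"
    by (intro sum.cong) (auto simp: delta_def)
  also have "\<dots> = (if \<beta> \<in> S then c \<beta> else 0)" using assms by simp
  finally show ?thesis .
qed

context stc
begin

lemma delta_HV: "\<alpha> \<in> C \<Longrightarrow> delta \<alpha> \<in> HV C"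
proof -
  assume a: "\<alpha> \<in> C"
  have "{\<beta>. (delta \<alpha> :: _ \<Rightarrow> complex) \<beta> \<noteq> 0} = {\<alpha>}" by (auto simp: delta_def)
  then have "delta \<alpha> \<in> l2space" by (intro l2_finite) simp
  then show ?thesis using a by (auto simp: HV_def supp_on_def delta_def)
qed

lemma HR_irred: "cstar_irred G (HR G C)"
proof -
  obtain \<alpha> where a: "\<alpha> \<in> C" using ne by auto
  have nz: "\<exists>v\<in>verts G. \<exists>x\<in>HV C. Pc G C v x \<noteq> (\<lambda>_. 0)"
  proof (intro bexI)
    show "pstart G \<alpha> \<in> verts G" using bd_start[OF wf] a sub by auto
    show "delta \<alpha> \<in> HV C" by (rule delta_HV[OF a])
    have "Pc G C (pstart G \<alpha>) (delta \<alpha> :: _ \<Rightarrow> complex) \<alpha> = 1" using a by (simp add: Pc_def delta_def)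
    then show "Pc G C (pstart G \<alpha>) (delta \<alpha>) \<noteq> (\<lambda>_. 0 :: complex)" by (auto dest: fun_cong[where x = \<alpha>])
  qed
  have inv: "K = {\<lambda>_. 0} \<or> K = HV C" if K: "cstar_invariant G (HR G C) K" for K
  proof (cases "K = {\<lambda>_. 0}")
    case True then show ?thesis by simp
  next
    case False
    have Hk: "hilbert_subspace K" using K by (simp add: cstar_invariant_def)
    have Wk: "ksubspace K" "K \<subseteq> HV C" "\<forall>v\<in>verts G. Pc G C v ` K \<subseteq> K"
      "\<forall>e\<in>edges G. Sc G C e ` K \<subseteq> K \<and> Sc' G C e ` K \<subseteq> K"
      using K unfolding cstar_invariant_def leavitt_invariant_def HR_def by auto
    have Wc: "\<forall>x\<in>K. supp_on C x" "\<forall>v\<in>verts G. \<forall>x\<in>K. Pc G C v x \<in> K"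
      "\<forall>e\<in>edges G. \<forall>x\<in>K. Sc G C e x \<in> K \<and> Sc' G C e x \<in> K"
      "\<forall>x\<in>K. \<forall>y\<in>K. (\<lambda>i. x i - y i) \<in> K"
      using Wk ksub_diff[OF Wk(1)] unfolding HV_def by (auto simp: image_subset_iff)
    have "(\<lambda>_. 0) \<in> K" using Wk(1) by (simp add: ksubspace_def)
    then obtain x where x: "x \<in> K" "x \<noteq> (\<lambda>_. 0)" using False by blast
    then obtain b where xb: "x b \<noteq> 0" by auto
    have xH: "x \<in> l2space" "supp_on C x" using x Wk unfolding HV_def by auto
    have bC: "b \<in> C" using xH(2) xb by (simp add: supp_on_def)
    have bb: "b \<in> boundary G" using bC sub by auto
    define g where "g = (\<lambda>i. x b * delta b i)"
    have gl: "g \<in> l2space" unfolding g_def using delta_HV[OF bC] l2_smult by (auto simp: HV_def)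
    have "g \<in> K"
    proof (rule approx_closed[OF Hk gl])
      fix n
      obtain F where F: "finite F" "infsum (\<lambda>\<beta>. if \<beta> \<in> F then 0 else sq x \<beta>) UNIV \<le> inverse (real (Suc n))"
        using tail[OF xH(1), of "inverse (real (Suc n))"] by auto
      define T where "T = F \<inter> C"
      have T: "finite T" "T \<subseteq> boundary G" using F(1) sub unfolding T_def by auto
      obtain m :: "_ \<Rightarrow> complex" where m: "realizable G m" "m b = 1" "\<forall>\<beta>\<in>T. \<beta> \<noteq> b \<longrightarrow> m \<beta> = 0"
        "\<forall>\<beta>. m \<beta> = 0 \<or> m \<beta> = 1"
        using separate[OF wf bb T(1) T(2)] by blast
      have XK: "mult m x \<in> K" using real_closed[OF m(1) Wc] x by auto
      define tf where "tf = (\<lambda>\<beta>. if \<beta> \<in> F then 0 else sq x \<beta>)"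
      have tfs: "tf summable_on UNIV"
        using infsum_le_dom(1)[of tf "sq x"] xH(1) by (auto simp: tf_def l2_iff)
      have le: "sq (\<lambda>i. mult m x i - g i) \<beta> \<le> tf \<beta>" for \<beta>
      proof (cases "\<beta> = b")
        case True then show ?thesis using m(2) by (simp add: sq_def mult_def g_def delta_def tf_def)
      next
        case False
        then have gz: "g \<beta> = 0" by (simp add: g_def delta_def)
        show ?thesis
        proof (cases "\<beta> \<in> F")
          case True
          then have "m \<beta> * x \<beta> = 0"
            using m(3) False xH(2) unfolding T_def supp_on_def by (cases "\<beta> \<in> C") auto
          then show ?thesis using gz True by (simp add: sq_def mult_def tf_def)
        next
          case nF: False
          have "cmod (m \<beta> * x \<beta>) \<le> cmod (x \<beta>)" using m(4)[rule_format, of \<beta>] by auto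
          then have "(cmod (m \<beta> * x \<beta>))\<^sup>2 \<le> (cmod (x \<beta>))\<^sup>2" by (simp add: power_mono)
          then show ?thesis using gz nF by (simp add: sq_def mult_def tf_def)
        qed
      qed
      have "infsum (sq (\<lambda>i. mult m x i - g i)) UNIV \<le> infsum tf UNIV"
        by (rule infsum_le_dom(2)[OF _ le tfs]) simp
      also have "\<dots> \<le> inverse (real (Suc n))" using F(2) by (simp add: tf_def)
      finally show "\<exists>X\<in>K. infsum (sq (\<lambda>i. X i - g i)) UNIV \<le> inverse (real (Suc n))"
        using XK by blast
    qed
    then have "(\<lambda>i. inverse (x b) * g i) \<in> K" by (rule ksub_smult[OF Wk(1)])
    moreover have "(\<lambda>i. inverse (x b) * g i) = delta b"
      using xb by (simp add: g_def fun_eq_iff mult.assoc[symmetric])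
    ultimately have db: "delta b \<in> K" by simp
    have alld: "delta \<beta> \<in> K" if "\<beta> \<in> C" for \<beta>
      using transport[OF Wc(3) bC db that] .
    have "HV C \<subseteq> K"
    proof
      fix y assume y: "y \<in> HV C"
      have yH: "y \<in> l2space" "supp_on C y" using y by (auto simp: HV_def)
      show "y \<in> K"
      proof (rule approx_closed[OF Hk yH(1)])
        fix n
        obtain F where F: "finite F" "infsum (\<lambda>\<beta>. if \<beta> \<in> F then 0 else sq y \<beta>) UNIV \<le> inverse (real (Suc n))"
          using tail[OF yH(1), of "inverse (real (Suc n))"] by auto
        define S where "S = F \<inter> C"
        have S: "finite S" "S \<subseteq> C" using F(1) unfolding S_def by auto
        define Y where "Y = (\<lambda>i. \<Sum>\<beta>\<in>S. y \<beta> * delta \<beta> i)"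
        have YK: "Y \<in> K" unfolding Y_def using sum_deltas[OF Wk(1) S(1)] alld S(2) by auto
        have "sq (\<lambda>i. Y i - y i) = (\<lambda>\<beta>. if \<beta> \<in> F then 0 else sq y \<beta>)"
        proof (rule ext)
          fix \<beta>
          have "Y \<beta> = (if \<beta> \<in> S then y \<beta> else 0)" unfolding Y_def by (rule sum_delta_eval[OF S(1)])
          then show "sq (\<lambda>i. Y i - y i) \<beta> = (if \<beta> \<in> F then 0 else sq y \<beta>)"
            using yH(2) unfolding S_def supp_on_def sq_def by auto
        qed
        then have "infsum (sq (\<lambda>i. Y i - y i)) UNIV \<le> inverse (real (Suc n))" using F(2) by simp
        then show "\<exists>X\<in>K. infsum (sq (\<lambda>i. X i - y i)) UNIV \<le> inverse (real (Suc n))"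
          using YK by blast
      qed
    qed
    then show ?thesis using Wk(2) by auto
  qed
  show ?thesis unfolding cstar_irred_def using HR_rep nz inv by (simp add: HR_def)
qed

end

lemma HR_equiv_eq:
  assumes c1: "stc G C1" and c2: "stc G C2"
    and eq: "unitary_equiv G (HR G C1) (HR G C2)"
  shows "C1 = C2"
proof -
  obtain U where U: "klinear_on (HV C1) U" "bij_betw U (HV C1) (HV C2)"
    "\<forall>v\<in>verts G. \<forall>x\<in>HV C1. U (Pc G C1 v x) = Pc G C2 v (U x)"
    "\<forall>e\<in>edges G. \<forall>x\<in>HV C1. U (Sc G C1 e x) = Sc G C2 e (U x) \<and> U (Sc' G C1 e x) = Sc' G C2 e (U x)"
    using eq unfolding unitary_equiv_def HR_def prod.case by blast
  obtain \<alpha> where a: "\<alpha> \<in> C1" using stc.ne[OF c1] by blast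
  have d: "delta \<alpha> \<in> HV C1" by (rule stc.delta_HV[OF c1 a])
  have z: "(\<lambda>_. 0) \<in> HV C1" using ksub_HV unfolding ksubspace_def by blast
  have h1: "\<forall>x\<in>HV C1. supp_on C1 x" by (simp add: HV_def)
  have h2: "\<forall>v\<in>verts G. \<forall>x\<in>HV C1. Pc G C1 v x \<in> HV C1" by (simp add: HV_P)
  have h3: "\<forall>e\<in>edges G. \<forall>x\<in>HV C1. Sc G C1 e x \<in> HV C1 \<and> Sc' G C1 e x \<in> HV C1"
    using stc.HV_S[OF c1] stc.HV_S'[OF c1] by blast
  have h4: "\<forall>x\<in>HV C1. \<forall>y\<in>HV C1. (\<lambda>i. x i - y i) \<in> HV C1"
    using ksub_diff[OF ksub_HV] by blast
  have h5: "\<forall>x\<in>HV C1. supp_on C2 (U x)"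
  proof
    fix x assume "x \<in> HV C1"
    then have "U x \<in> HV C2" using U(2) bij_betwE by blast
    then show "supp_on C2 (U x)" by (simp add: HV_def)
  qed
  have h6: "\<forall>x\<in>HV C1. \<forall>y\<in>HV C1. U (\<lambda>i. x i - y i) = (\<lambda>i. U x i - U y i)"
    using klin_diff[OF ksub_HV U(1)] by blast
  have h7: "inj_on U (HV C1)" using U(2) by (simp add: bij_betw_def)
  have "\<alpha> \<in> C2" by (rule distinguish[OF c1 c2 a d z h1 h2 h3 h4 h5 h6 U(3) U(4) h7])
  then show ?thesis using stc_eq[OF c1 c2 a] by simp
qed

lemma unitary_refl: "unitary_equiv G R R"
  unfolding unitary_equiv_def
  by (cases R) (auto intro!: exI[of _ id] simp: klinear_on_def)

lemma alg_refl: "alg_equiv G R R"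
  unfolding alg_equiv_def
  by (cases R) (auto intro!: exI[of _ id] simp: klinear_on_def)


theorem corollary3p15:
  fixes G :: "('v, 'e) graph"
  assumes "wf_graph G"
  shows
    "(\<exists>\<phi>. inj_on \<phi> (shift_tail_classes G) \<and>
          \<phi> ` shift_tail_classes G \<subseteq> (cstar_irred_classes G :: (('v, 'e) path, 'v, 'e) crep set set))
   \<and> ((\<forall>R1 R2 :: (('v, 'e) path, 'v, 'e) crep. cstar_rep G R1 \<longrightarrow> cstar_rep G R2 \<longrightarrow> unitary_equiv G R1 R2)
        \<longrightarrow> (\<forall>\<alpha>\<in>boundary G. \<forall>\<beta>\<in>boundary G. shift_tail_equiv G \<alpha> \<beta>))
   \<and> (\<exists>\<phi>. inj_on \<phi> (shift_tail_classes G) \<and>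
          \<phi> ` shift_tail_classes G \<subseteq> (leavitt_irred_classes G :: (('v, 'e) path, 'k::field, 'v, 'e) lrep set set))
   \<and> ((\<forall>R1 R2 :: (('v, 'e) path, 'k::field, 'v, 'e) lrep. leavitt_rep G R1 \<longrightarrow> leavitt_rep G R2 \<longrightarrow> alg_equiv G R1 R2)
        \<longrightarrow> (\<forall>\<alpha>\<in>boundary G. \<forall>\<beta>\<in>boundary G. shift_tail_equiv G \<alpha> \<beta>))"
proof (intro conjI)
  note wf = assms
  have stcI: "stc G C" if "C \<in> shift_tail_classes G" for C using wf that by (simp add: stc_def)
  define rc where "rc = {(R1 :: (('v, 'e) path, 'v, 'e) crep, R2). cstar_irred G R1 \<and> cstar_irred G R2 \<and> unitary_equiv G R1 R2}"
  define rl where "rl = {(R1 :: (('v, 'e) path, 'k, 'v, 'e) lrep, R2). leavitt_irred G R1 \<and> leavitt_irred G R2 \<and> alg_equiv G R1 R2}"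
  show "\<exists>\<phi>. inj_on \<phi> (shift_tail_classes G) \<and>
          \<phi> ` shift_tail_classes G \<subseteq> (cstar_irred_classes G :: (('v, 'e) path, 'v, 'e) crep set set)"
  proof (intro exI conjI)
    let ?\<phi> = "\<lambda>C. rc `` {HR G C}"
    show "?\<phi> ` shift_tail_classes G \<subseteq> cstar_irred_classes G"
    proof
      fix X assume "X \<in> ?\<phi> ` shift_tail_classes G"
      then obtain C where C: "C \<in> shift_tail_classes G" "X = rc `` {HR G C}" by blast
      have "HR G C \<in> {R. cstar_irred G R}" using stc.HR_irred[OF stcI[OF C(1)]] by simp
      then show "X \<in> cstar_irred_classes G" unfolding cstar_irred_classes_def C(2) rc_def
        by (rule quotientI)
    qed
    show "inj_on ?\<phi> (shift_tail_classes G)"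
    proof (rule inj_onI)
      fix C D assume C: "C \<in> shift_tail_classes G" and D: "D \<in> shift_tail_classes G"
        and eq: "rc `` {HR G C} = rc `` {HR G D}"
      have "(HR G C, HR G C) \<in> rc" unfolding rc_def using stc.HR_irred[OF stcI[OF C]] unitary_refl by simp
      then have "(HR G D, HR G C) \<in> rc" using eq by blast
      then have "unitary_equiv G (HR G D) (HR G C)" by (simp add: rc_def)
      then show "C = D" using HR_equiv_eq[OF stcI[OF D] stcI[OF C]] by simp
    qed
  qed
  show "(\<forall>R1 R2 :: (('v, 'e) path, 'v, 'e) crep. cstar_rep G R1 \<longrightarrow> cstar_rep G R2 \<longrightarrow> unitary_equiv G R1 R2)
        \<longrightarrow> (\<forall>\<alpha>\<in>boundary G. \<forall>\<beta>\<in>boundary G. shift_tail_equiv G \<alpha> \<beta>)"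
  proof (intro impI ballI)
    fix \<alpha> \<beta> assume all: "\<forall>R1 R2 :: (('v, 'e) path, 'v, 'e) crep. cstar_rep G R1 \<longrightarrow> cstar_rep G R2 \<longrightarrow> unitary_equiv G R1 R2"
      and a: "\<alpha> \<in> boundary G" and b: "\<beta> \<in> boundary G"
    have ca: "stc G (strel G `` {\<alpha>})" "\<alpha> \<in> strel G `` {\<alpha>}" using stc_of[OF wf a] by auto
    have cb: "stc G (strel G `` {\<beta>})" "\<beta> \<in> strel G `` {\<beta>}" using stc_of[OF wf b] by auto
    have "unitary_equiv G (HR G (strel G `` {\<alpha>})) (HR G (strel G `` {\<beta>}))"
      using all stc.HR_rep[OF ca(1)] stc.HR_rep[OF cb(1)] by blast
    then have "strel G `` {\<alpha>} = strel G `` {\<beta>}" by (rule HR_equiv_eq[OF ca(1) cb(1)])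
    then have "\<beta> \<in> strel G `` {\<alpha>}" using cb(2) by (simp only:)
    then have "(\<alpha>, \<beta>) \<in> strel G" by simp
    then show "shift_tail_equiv G \<alpha> \<beta>" by (simp add: strel_def)
  qed
  show "\<exists>\<phi>. inj_on \<phi> (shift_tail_classes G) \<and>
          \<phi> ` shift_tail_classes G \<subseteq> (leavitt_irred_classes G :: (('v, 'e) path, 'k::field, 'v, 'e) lrep set set)"
  proof (intro exI conjI)
    let ?\<phi> = "\<lambda>C. rl `` {LR G C :: (('v, 'e) path, 'k, 'v, 'e) lrep}"
    show "?\<phi> ` shift_tail_classes G \<subseteq> leavitt_irred_classes G"
    proof
      fix X assume "X \<in> ?\<phi> ` shift_tail_classes G"
      then obtain C where C: "C \<in> shift_tail_classes G" "X = rl `` {LR G C}" by blast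
      have "(LR G C :: (('v, 'e) path, 'k, 'v, 'e) lrep) \<in> {R. leavitt_irred G R}"
        using stc.LR_irred[OF stcI[OF C(1)]] by simp
      then show "X \<in> leavitt_irred_classes G" unfolding leavitt_irred_classes_def C(2) rl_def
        by (rule quotientI)
    qed
    show "inj_on ?\<phi> (shift_tail_classes G)"
    proof (rule inj_onI)
      fix C D assume C: "C \<in> shift_tail_classes G" and D: "D \<in> shift_tail_classes G"
        and eq: "rl `` {LR G C :: (('v, 'e) path, 'k, 'v, 'e) lrep} = rl `` {LR G D}"
      have "(LR G C :: (('v, 'e) path, 'k, 'v, 'e) lrep, LR G C) \<in> rl"
        unfolding rl_def using stc.LR_irred[OF stcI[OF C]] by (simp add: alg_refl)
      then have "(LR G D :: (('v, 'e) path, 'k, 'v, 'e) lrep, LR G C) \<in> rl" using eq by blast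
      then have "alg_equiv G (LR G D :: (('v, 'e) path, 'k, 'v, 'e) lrep) (LR G C)" by (simp add: rl_def)
      then have "D = C" by (rule LR_equiv_eq[OF stcI[OF D] stcI[OF C]])
      then show "C = D" by simp
    qed
  qed
  show "(\<forall>R1 R2 :: (('v, 'e) path, 'k::field, 'v, 'e) lrep. leavitt_rep G R1 \<longrightarrow> leavitt_rep G R2 \<longrightarrow> alg_equiv G R1 R2)
        \<longrightarrow> (\<forall>\<alpha>\<in>boundary G. \<forall>\<beta>\<in>boundary G. shift_tail_equiv G \<alpha> \<beta>)"
  proof (intro impI ballI)
    fix \<alpha> \<beta> assume all: "\<forall>R1 R2 :: (('v, 'e) path, 'k::field, 'v, 'e) lrep. leavitt_rep G R1 \<longrightarrow> leavitt_rep G R2 \<longrightarrow> alg_equiv G R1 R2"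
      and a: "\<alpha> \<in> boundary G" and b: "\<beta> \<in> boundary G"
    have ca: "stc G (strel G `` {\<alpha>})" "\<alpha> \<in> strel G `` {\<alpha>}" using stc_of[OF wf a] by auto
    have cb: "stc G (strel G `` {\<beta>})" "\<beta> \<in> strel G `` {\<beta>}" using stc_of[OF wf b] by auto
    have "alg_equiv G (LR G (strel G `` {\<alpha>}) :: (('v, 'e) path, 'k, 'v, 'e) lrep) (LR G (strel G `` {\<beta>}))"
      using all stc.LR_rep[OF ca(1)] stc.LR_rep[OF cb(1)] by blast
    then have "strel G `` {\<alpha>} = strel G `` {\<beta>}" by (rule LR_equiv_eq[OF ca(1) cb(1)])
    then have "\<beta> \<in> strel G `` {\<alpha>}" using cb(2) by (simp only:)
    then have "(\<alpha>, \<beta>) \<in> strel G" by simp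
    then show "shift_tail_equiv G \<alpha> \<beta>" by (simp add: strel_def)
  qed
qed


end
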